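(* In the supersample construction described in the context, for every $i=1,\dots,n$, $$I(W;R_i\mid Z_i^\pm)\le I(W;Z_i),$$ where on the right-hand side $(W,Z_{[n]})$ has joint law $\xi^{\otimes n}\otimes P_{W|Z_{[n]}}$ (equivalently, $I(W;Z_i)=I(W;Z_i^{R_i})$ in the supersample construction).
   Context: Let $\xi$ be a distribution on a data space $\mathcal Z$ and $P_{W|Z_{[n]}}$ a Markov kernel from $\mathcal Z^n$ to a parameter space $\mathcal W$ (a learning algorithm); $Z_{[n]}=(Z_1,\dots,Z_n)$ denotes i.i.d. samples from $\xi$ with $W\sim P_{W|Z_{[n]}}$. Supersample construction: $Z_i^-,Z_i^+$ ($i=1,\dots,n$) are $2n$ i.i.d. samples from $\xi$, $Z_i^\pm=(Z_i^-,Z_i^+)$; $R_1,\dots,R_n$ are i.i.d. uniform on $\{-1,1\}$, independent of the samples; $W$ is the output of $P_{W|Z_{[n]}}$ on the training vector $(Z_1^{R_1},\dots,Z_n^{R_n})$, where $Z_i^{1}=Z_i^+$ and $Z_i^{-1}=Z_i^-$. *)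

theory Defs
  imports "HOL-Probability.Probability"
begin

definition KL_div :: "'a measure \<Rightarrow> 'a measure \<Rightarrow> ereal" where
  "KL_div P Q =
     (if absolutely_continuous Q P then
        (let f = (\<lambda>x. enn2real (RN_deriv Q P x)) in
          enn2ereal (\<integral>\<^sup>+ x. ennreal (ln (f x)) \<partial>P)
          - enn2ereal (\<integral>\<^sup>+ x. ennreal (- ln (f x)) \<partial>P))
      else \<infinity>)"

definition mutual_info ::
  "'o measure \<Rightarrow> 'a measure \<Rightarrow> 'b measure \<Rightarrow> ('o \<Rightarrow> 'a) \<Rightarrow> ('o \<Rightarrow> 'b) \<Rightarrow> ereal" where
  "mutual_info M MX MY X Y =
     KL_div (distr M (MX \<Otimes>\<^sub>M MY) (\<lambda>\<omega>. (X \<omega>, Y \<omega>)))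
            (distr M MX X \<Otimes>\<^sub>M distr M MY Y)"

text \<open>Conditional probability P(X \<in> A | Z = z), as the Radon-Nikodym derivative of
  C \<mapsto> P(X \<in> A, Z \<in> C) with respect to the law of Z.\<close>
definition cond_prob ::
  "'o measure \<Rightarrow> 'a measure \<Rightarrow> 'c measure \<Rightarrow> ('o \<Rightarrow> 'a) \<Rightarrow> ('o \<Rightarrow> 'c) \<Rightarrow> 'a set \<Rightarrow> 'c \<Rightarrow> ennreal" where
  "cond_prob M MX MZ X Z A =
     RN_deriv (distr M MZ Z)
              (distr (density M (indicator (X -` A \<inter> space M))) MZ Z)"

text \<open>The reference measure P_{X|Z} \<otimes> P_{Y|Z} \<otimes> P_Z on MX \<times> MY \<times> MZ (conditional
  product), characterised by its values on measurable rectangles.\<close>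
definition cond_product ::
  "'o measure \<Rightarrow> 'a measure \<Rightarrow> 'b measure \<Rightarrow> 'c measure \<Rightarrow>
   ('o \<Rightarrow> 'a) \<Rightarrow> ('o \<Rightarrow> 'b) \<Rightarrow> ('o \<Rightarrow> 'c) \<Rightarrow> ('a \<times> 'b \<times> 'c) measure" where
  "cond_product M MX MY MZ X Y Z =
     (THE Q. sets Q = sets (MX \<Otimes>\<^sub>M MY \<Otimes>\<^sub>M MZ) \<and>
        (\<forall>A\<in>sets MX. \<forall>B\<in>sets MY. \<forall>C\<in>sets MZ.
           emeasure Q (A \<times> B \<times> C) =
             (\<integral>\<^sup>+ z\<in>C. cond_prob M MX MZ X Z A z * cond_prob M MY MZ Y Z B z \<partial>(distr M MZ Z))))"

definition cond_mutual_info ::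
  "'o measure \<Rightarrow> 'a measure \<Rightarrow> 'b measure \<Rightarrow> 'c measure \<Rightarrow>
   ('o \<Rightarrow> 'a) \<Rightarrow> ('o \<Rightarrow> 'b) \<Rightarrow> ('o \<Rightarrow> 'c) \<Rightarrow> ereal" where
  "cond_mutual_info M MX MY MZ X Y Z =
     KL_div (distr M (MX \<Otimes>\<^sub>M MY \<Otimes>\<^sub>M MZ) (\<lambda>\<omega>. (X \<omega>, Y \<omega>, Z \<omega>)))
            (cond_product M MX MY MZ X Y Z)"

definition rademacher :: "int measure" where
  "rademacher = measure_pmf (pmf_of_set {-1, 1})"

definition select_train :: "nat \<Rightarrow> (nat \<Rightarrow> 'z) \<Rightarrow> (nat \<Rightarrow> 'z) \<Rightarrow> (nat \<Rightarrow> int) \<Rightarrow> nat \<Rightarrow> 'z" where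
  "select_train n zm zp r = (\<lambda>i\<in>{..<n}. if r i = 1 then zp i else zm i)"

text \<open>Joint law of (Z^-, Z^+, R) in the supersample construction.\<close>
definition supersample_base ::
  "nat \<Rightarrow> 'z measure \<Rightarrow> ((nat \<Rightarrow> 'z) \<times> (nat \<Rightarrow> 'z) \<times> (nat \<Rightarrow> int)) measure" where
  "supersample_base n \<xi> =
     PiM {..<n} (\<lambda>_. \<xi>) \<Otimes>\<^sub>M PiM {..<n} (\<lambda>_. \<xi>) \<Otimes>\<^sub>M PiM {..<n} (\<lambda>_. rademacher)"

definition supersample ::
  "nat \<Rightarrow> 'z measure \<Rightarrow> 'w measure \<Rightarrow> ((nat \<Rightarrow> 'z) \<Rightarrow> 'w measure) \<Rightarrow>
   (((nat \<Rightarrow> 'z) \<times> (nat \<Rightarrow> 'z) \<times> (nat \<Rightarrow> int)) \<times> 'w) measure" where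
  "supersample n \<xi> MW K =
     supersample_base n \<xi> \<bind>
       (\<lambda>s. distr (K (case s of (zm, zp, r) \<Rightarrow> select_train n zm zp r))
                   (supersample_base n \<xi> \<Otimes>\<^sub>M MW) (\<lambda>w. (s, w)))"

definition standard_law ::
  "nat \<Rightarrow> 'z measure \<Rightarrow> 'w measure \<Rightarrow> ((nat \<Rightarrow> 'z) \<Rightarrow> 'w measure) \<Rightarrow> ((nat \<Rightarrow> 'z) \<times> 'w) measure" where
  "standard_law n \<xi> MW K =
     PiM {..<n} (\<lambda>_. \<xi>) \<bind> (\<lambda>z. distr (K z) (PiM {..<n} (\<lambda>_. \<xi>) \<Otimes>\<^sub>M MW) (\<lambda>w. (z, w)))"

end

theory Submission
  imports Defs
begin


lemma rad_prob: "prob_space rademacher"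
  unfolding rademacher_def by (rule prob_space_measure_pmf)

lemma sets_rad[simp, measurable_cong]: "sets rademacher = UNIV"
  unfolding rademacher_def by simp
lemma space_rad[simp]: "space rademacher = UNIV"
  unfolding rademacher_def by simp

lemma nn_integral_rad: "(\<integral>\<^sup>+ r. f r \<partial>rademacher) = (f 1 + f (-1)) / 2"
  unfolding rademacher_def
  by (subst nn_integral_pmf_of_set) (auto simp: add.commute)

definition selJ :: "nat set \<Rightarrow> (nat \<Rightarrow> 'z) \<Rightarrow> (nat \<Rightarrow> 'z) \<Rightarrow> (nat \<Rightarrow> int) \<Rightarrow> nat \<Rightarrow> 'z" where
  "selJ J zm zp r = (\<lambda>j\<in>J. if r j = 1 then zp j else zm j)"

lemma select_train_selJ: "select_train n = selJ {..<n}"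
  by (simp add: fun_eq_iff select_train_def selJ_def)

lemma measurable_selJ[measurable]:
  assumes [measurable]: "f \<in> N \<rightarrow>\<^sub>M PiM J (\<lambda>_. M)" "g \<in> N \<rightarrow>\<^sub>M PiM J (\<lambda>_. M)"
     "h \<in> N \<rightarrow>\<^sub>M PiM J (\<lambda>_. rademacher)"
  shows "(\<lambda>x. selJ J (f x) (g x) (h x)) \<in> N \<rightarrow>\<^sub>M PiM J (\<lambda>_. M)"
  unfolding selJ_def
proof (rule measurable_restrict)
  fix j assume j: "j \<in> J"
  have [measurable]: "(\<lambda>x. h x j) \<in> N \<rightarrow>\<^sub>M rademacher" using j by measurable
  have [measurable]: "(\<lambda>x. f x j) \<in> N \<rightarrow>\<^sub>M M" using j by measurable
  have [measurable]: "(\<lambda>x. g x j) \<in> N \<rightarrow>\<^sub>M M" using j by measurable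
  have [measurable]: "{x \<in> space N. h x j = 1} \<in> sets N"
  proof -
    have "{x \<in> space N. h x j = 1} = (\<lambda>x. h x j) -` {1} \<inter> space N" by auto
    also have "\<dots> \<in> sets N" by (rule measurable_sets[of _ N rademacher]) auto
    finally show ?thesis .
  qed
  show "(\<lambda>x. if h x j = 1 then g x j else f x j) \<in> N \<rightarrow>\<^sub>M M"
    by measurable
qed

lemma mix_lemma:
  assumes P: "prob_space M" and h[measurable]: "h \<in> borel_measurable M"
  shows "(\<integral>\<^sup>+a. \<integral>\<^sup>+b. \<integral>\<^sup>+\<rho>. h (if \<rho> = 1 then b else a) \<partial>rademacher \<partial>M \<partial>M) = (\<integral>\<^sup>+x. h x \<partial>M)"
proof -
  interpret prob_space M by fact
  have "(\<integral>\<^sup>+a. \<integral>\<^sup>+b. \<integral>\<^sup>+\<rho>. h (if \<rho> = 1 then b else a) \<partial>rademacher \<partial>M \<partial>M)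
      = (\<integral>\<^sup>+a. \<integral>\<^sup>+b. (h b + h a) / 2 \<partial>M \<partial>M)"
    by (simp add: nn_integral_rad)
  also have "\<dots> = (\<integral>\<^sup>+a. ((\<integral>\<^sup>+b. h b \<partial>M) + h a) / 2 \<partial>M)"
    by (simp add: divide_ennreal_def nn_integral_multc nn_integral_add emeasure_space_1)
  also have "\<dots> = ((\<integral>\<^sup>+b. h b \<partial>M) + (\<integral>\<^sup>+b. h b \<partial>M)) / 2"
    by (simp add: divide_ennreal_def nn_integral_multc nn_integral_add emeasure_space_1)
  also have "\<dots> = (\<integral>\<^sup>+x. h x \<partial>M)"
    by (simp add: mult_2[symmetric] mult.commute[of 2] ennreal_mult_divide_eq)
  finally show ?thesis .
qed

lemma selJ_insert:
  assumes "j \<notin> J"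
  shows "selJ (insert j J) (zm(j:=a)) (zp(j:=b)) (r(j:=\<rho>)) = (selJ J zm zp r)(j := (if \<rho> = 1 then b else a))"
  using assms by (auto simp: selJ_def fun_eq_iff)

lemma sel_iid:
  assumes P: "prob_space \<xi>" and J: "finite J"
  shows "f \<in> borel_measurable (PiM J (\<lambda>_. \<xi>)) \<Longrightarrow>
    (\<integral>\<^sup>+zm. \<integral>\<^sup>+zp. \<integral>\<^sup>+r. f (selJ J zm zp r) \<partial>PiM J (\<lambda>_. rademacher) \<partial>PiM J (\<lambda>_. \<xi>) \<partial>PiM J (\<lambda>_. \<xi>))
     = (\<integral>\<^sup>+z. f z \<partial>PiM J (\<lambda>_. \<xi>))"
  using J
proof (induction J arbitrary: f rule: finite_induct)
  case empty
  interpret R: prob_space "PiM {} (\<lambda>_. rademacher)" by (rule prob_space_PiM) (simp_all add: P rad_prob)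
  interpret Z: prob_space "PiM {} (\<lambda>_. \<xi>)" by (rule prob_space_PiM) (simp_all add: P rad_prob)
  show ?case by (simp add: PiM_empty nn_integral_count_space_finite selJ_def)
next
  case (insert j J)
  note [measurable] = insert.prems
  interpret Z: product_sigma_finite "\<lambda>_. \<xi>"
    by (simp add: product_sigma_finite_def P prob_space_imp_sigma_finite)
  interpret R: product_sigma_finite "\<lambda>_. rademacher"
    by (simp add: product_sigma_finite_def rad_prob prob_space_imp_sigma_finite)
  interpret xi: prob_space \<xi> by fact
  interpret rad: prob_space rademacher by (rule rad_prob)
  let ?Z = "\<lambda>J. PiM J (\<lambda>_. \<xi>)" and ?R = "\<lambda>J. PiM J (\<lambda>_. rademacher)"
  interpret ZJ: prob_space "?Z J" by (rule prob_space_PiM) (simp add: P)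
  interpret ZJ': prob_space "?Z (insert j J)" by (rule prob_space_PiM) (simp add: P)
  interpret RJ: prob_space "?R J" by (rule prob_space_PiM) (simp add: rad_prob)
  interpret RJ': prob_space "?R (insert j J)" by (rule prob_space_PiM) (simp add: rad_prob)
  have LHS: "(\<integral>\<^sup>+zm. \<integral>\<^sup>+zp. \<integral>\<^sup>+r. f (selJ (insert j J) zm zp r) \<partial>?R (insert j J) \<partial>?Z (insert j J) \<partial>?Z (insert j J))
     = (\<integral>\<^sup>+zm. \<integral>\<^sup>+a. \<integral>\<^sup>+zp. \<integral>\<^sup>+b. \<integral>\<^sup>+r. \<integral>\<^sup>+\<rho>.
           f ((selJ J zm zp r)(j := (if \<rho> = 1 then b else a))) \<partial>rademacher \<partial>?R J \<partial>\<xi> \<partial>?Z J \<partial>\<xi> \<partial>?Z J)"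
    apply (subst Z.product_nn_integral_insert[OF insert(1,2)])
     apply measurable
  proof (intro nn_integral_cong)
    fix zm a assume zm: "zm \<in> space (?Z J)" and a: "a \<in> space \<xi>"
    have zma[measurable]: "zm(j:=a) \<in> space (?Z (insert j J))"
      using zm a by (auto simp: space_PiM PiE_def extensional_def)
    show "(\<integral>\<^sup>+zp. \<integral>\<^sup>+r. f (selJ (insert j J) (zm(j:=a)) zp r) \<partial>?R (insert j J) \<partial>?Z (insert j J)) =
      (\<integral>\<^sup>+zp. \<integral>\<^sup>+b. \<integral>\<^sup>+r. \<integral>\<^sup>+\<rho>.
           f ((selJ J zm zp r)(j := (if \<rho> = 1 then b else a))) \<partial>rademacher \<partial>?R J \<partial>\<xi> \<partial>?Z J)"
      apply (subst Z.product_nn_integral_insert[OF insert(1,2)])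
       apply measurable
    proof (intro nn_integral_cong)
      fix zp b assume zp: "zp \<in> space (?Z J)" and b: "b \<in> space \<xi>"
      have zpb[measurable]: "zp(j:=b) \<in> space (?Z (insert j J))"
        using zp b by (auto simp: space_PiM PiE_def extensional_def)
      show "(\<integral>\<^sup>+r. f (selJ (insert j J) (zm(j:=a)) (zp(j:=b)) r) \<partial>?R (insert j J)) =
        (\<integral>\<^sup>+r. \<integral>\<^sup>+\<rho>. f ((selJ J zm zp r)(j := (if \<rho> = 1 then b else a))) \<partial>rademacher \<partial>?R J)"
        apply (subst R.product_nn_integral_insert[OF insert(1,2)])
         apply measurable
        apply (simp add: selJ_insert insert(2))
        done
    qed
  qed

  interpret pZx: pair_sigma_finite "?Z J" \<xi> by unfold_locales
  interpret pRx: pair_sigma_finite "?R J" \<xi> by unfold_locales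
  let ?F = "\<lambda>zm zp r a b. \<integral>\<^sup>+\<rho>. f ((selJ J zm zp r)(j := (if \<rho> = 1 then b else a))) \<partial>rademacher"
  have [measurable]: "(\<lambda>(zm, zp, r, a, b). ?F zm zp r a b) \<in> borel_measurable (?Z J \<Otimes>\<^sub>M ?Z J \<Otimes>\<^sub>M ?R J \<Otimes>\<^sub>M \<xi> \<Otimes>\<^sub>M \<xi>)"
    by measurable
  have "(\<integral>\<^sup>+zm. \<integral>\<^sup>+a. \<integral>\<^sup>+zp. \<integral>\<^sup>+b. \<integral>\<^sup>+r. ?F zm zp r a b \<partial>?R J \<partial>\<xi> \<partial>?Z J \<partial>\<xi> \<partial>?Z J)
      = (\<integral>\<^sup>+zm. \<integral>\<^sup>+zp. \<integral>\<^sup>+a. \<integral>\<^sup>+b. \<integral>\<^sup>+r. ?F zm zp r a b \<partial>?R J \<partial>\<xi> \<partial>\<xi> \<partial>?Z J \<partial>?Z J)"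
  proof (intro nn_integral_cong)
    fix zm assume [measurable]: "zm \<in> space (?Z J)"
    show "(\<integral>\<^sup>+a. \<integral>\<^sup>+zp. \<integral>\<^sup>+b. \<integral>\<^sup>+r. ?F zm zp r a b \<partial>?R J \<partial>\<xi> \<partial>?Z J \<partial>\<xi>) =
      (\<integral>\<^sup>+zp. \<integral>\<^sup>+a. \<integral>\<^sup>+b. \<integral>\<^sup>+r. ?F zm zp r a b \<partial>?R J \<partial>\<xi> \<partial>\<xi> \<partial>?Z J)"
      by (rule pZx.Fubini') measurable
  qed
  also have "\<dots> = (\<integral>\<^sup>+zm. \<integral>\<^sup>+zp. \<integral>\<^sup>+a. \<integral>\<^sup>+r. \<integral>\<^sup>+b. ?F zm zp r a b \<partial>\<xi> \<partial>?R J \<partial>\<xi> \<partial>?Z J \<partial>?Z J)"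
  proof (intro nn_integral_cong)
    fix zm zp a assume [measurable]: "zm \<in> space (?Z J)" "zp \<in> space (?Z J)" "a \<in> space \<xi>"
    show "(\<integral>\<^sup>+b. \<integral>\<^sup>+r. ?F zm zp r a b \<partial>?R J \<partial>\<xi>) = (\<integral>\<^sup>+r. \<integral>\<^sup>+b. ?F zm zp r a b \<partial>\<xi> \<partial>?R J)"
      by (rule pRx.Fubini') measurable
  qed
  also have "\<dots> = (\<integral>\<^sup>+zm. \<integral>\<^sup>+zp. \<integral>\<^sup>+r. \<integral>\<^sup>+a. \<integral>\<^sup>+b. ?F zm zp r a b \<partial>\<xi> \<partial>\<xi> \<partial>?R J \<partial>?Z J \<partial>?Z J)"
  proof (intro nn_integral_cong)
    fix zm zp assume [measurable]: "zm \<in> space (?Z J)" "zp \<in> space (?Z J)"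
    show "(\<integral>\<^sup>+a. \<integral>\<^sup>+r. \<integral>\<^sup>+b. ?F zm zp r a b \<partial>\<xi> \<partial>?R J \<partial>\<xi>) = (\<integral>\<^sup>+r. \<integral>\<^sup>+a. \<integral>\<^sup>+b. ?F zm zp r a b \<partial>\<xi> \<partial>\<xi> \<partial>?R J)"
      by (rule pRx.Fubini') measurable
  qed
  also have "\<dots> = (\<integral>\<^sup>+zm. \<integral>\<^sup>+zp. \<integral>\<^sup>+r. (\<lambda>X. \<integral>\<^sup>+y. f (X(j:=y)) \<partial>\<xi>) (selJ J zm zp r) \<partial>?R J \<partial>?Z J \<partial>?Z J)"
  proof (rule nn_integral_cong, rule nn_integral_cong, rule nn_integral_cong)
    fix zm zp r assume "zm \<in> space (?Z J)" "zp \<in> space (?Z J)" "r \<in> space (?R J)"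
    then have X[measurable]: "selJ J zm zp r \<in> space (?Z J)"
      using measurable_space[OF measurable_selJ[of fst "?Z J \<Otimes>\<^sub>M ?Z J \<Otimes>\<^sub>M ?R J" J \<xi> "\<lambda>x. fst (snd x)" "\<lambda>x. snd (snd x)"], of "(zm, zp, r)"]
      by (simp add: space_pair_measure)
    show "(\<integral>\<^sup>+a. \<integral>\<^sup>+b. ?F zm zp r a b \<partial>\<xi> \<partial>\<xi>) = (\<lambda>X. \<integral>\<^sup>+y. f (X(j:=y)) \<partial>\<xi>) (selJ J zm zp r)"
    proof -
      have "(\<lambda>y. f ((selJ J zm zp r)(j:=y))) \<in> borel_measurable \<xi>" by measurable
      from mix_lemma[OF P this] show ?thesis by simp
    qed
  qed
  also have "\<dots> = (\<integral>\<^sup>+X. (\<integral>\<^sup>+y. f (X(j:=y)) \<partial>\<xi>) \<partial>?Z J)"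
    by (rule insert.IH) measurable
  also have "\<dots> = (\<integral>\<^sup>+z. f z \<partial>?Z (insert j J))"
    by (rule Z.product_nn_integral_insert[OF insert(1,2), symmetric]) measurable
  finally show ?case using LHS by simp
qed


lemma split3:
  assumes P: "prob_space \<xi>" and J: "finite J" "i \<notin> J"
    and F[measurable]: "F \<in> borel_measurable
        (PiM (insert i J) (\<lambda>_. \<xi>) \<Otimes>\<^sub>M PiM (insert i J) (\<lambda>_. \<xi>) \<Otimes>\<^sub>M PiM (insert i J) (\<lambda>_. rademacher))"
  shows "(\<integral>\<^sup>+zm. \<integral>\<^sup>+zp. \<integral>\<^sup>+r. F (zm, zp, r) \<partial>PiM (insert i J) (\<lambda>_. rademacher) \<partial>PiM (insert i J) (\<lambda>_. \<xi>) \<partial>PiM (insert i J) (\<lambda>_. \<xi>))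
   = (\<integral>\<^sup>+zm. \<integral>\<^sup>+zp. \<integral>\<^sup>+r. \<integral>\<^sup>+a. \<integral>\<^sup>+b. \<integral>\<^sup>+\<rho>. F (zm(i:=a), zp(i:=b), r(i:=\<rho>))
        \<partial>rademacher \<partial>\<xi> \<partial>\<xi> \<partial>PiM J (\<lambda>_. rademacher) \<partial>PiM J (\<lambda>_. \<xi>) \<partial>PiM J (\<lambda>_. \<xi>))"
proof -
  interpret Z: product_sigma_finite "\<lambda>_. \<xi>"
    by (simp add: product_sigma_finite_def P prob_space_imp_sigma_finite)
  interpret R: product_sigma_finite "\<lambda>_. rademacher"
    by (simp add: product_sigma_finite_def rad_prob prob_space_imp_sigma_finite)
  interpret xi: prob_space \<xi> by fact
  interpret rad: prob_space rademacher by (rule rad_prob)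
  let ?Z = "\<lambda>J. PiM J (\<lambda>_. \<xi>)" and ?R = "\<lambda>J. PiM J (\<lambda>_. rademacher)"
  interpret ZJ: prob_space "?Z J" by (rule prob_space_PiM) (simp add: P)
  interpret ZJ': prob_space "?Z (insert i J)" by (rule prob_space_PiM) (simp add: P)
  interpret RJ: prob_space "?R J" by (rule prob_space_PiM) (simp add: rad_prob)
  interpret RJ': prob_space "?R (insert i J)" by (rule prob_space_PiM) (simp add: rad_prob)
  interpret pZx: pair_sigma_finite "?Z J" \<xi> by unfold_locales
  interpret pRx: pair_sigma_finite "?R J" \<xi> by unfold_locales
  have "(\<integral>\<^sup>+zm. \<integral>\<^sup>+zp. \<integral>\<^sup>+r. F (zm, zp, r) \<partial>?R (insert i J) \<partial>?Z (insert i J) \<partial>?Z (insert i J))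
     = (\<integral>\<^sup>+zm. \<integral>\<^sup>+a. \<integral>\<^sup>+zp. \<integral>\<^sup>+b. \<integral>\<^sup>+r. \<integral>\<^sup>+\<rho>.
           F (zm(i:=a), zp(i:=b), r(i:=\<rho>)) \<partial>rademacher \<partial>?R J \<partial>\<xi> \<partial>?Z J \<partial>\<xi> \<partial>?Z J)"
    apply (subst Z.product_nn_integral_insert[OF J])
     apply measurable
  proof (intro nn_integral_cong)
    fix zm a assume zm: "zm \<in> space (?Z J)" and a: "a \<in> space \<xi>"
    have zma[measurable]: "zm(i:=a) \<in> space (?Z (insert i J))"
      using zm a by (auto simp: space_PiM PiE_def extensional_def)
    show "(\<integral>\<^sup>+zp. \<integral>\<^sup>+r. F (zm(i:=a), zp, r) \<partial>?R (insert i J) \<partial>?Z (insert i J)) =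
      (\<integral>\<^sup>+zp. \<integral>\<^sup>+b. \<integral>\<^sup>+r. \<integral>\<^sup>+\<rho>.
           F (zm(i:=a), zp(i:=b), r(i:=\<rho>)) \<partial>rademacher \<partial>?R J \<partial>\<xi> \<partial>?Z J)"
      apply (subst Z.product_nn_integral_insert[OF J])
       apply measurable
    proof (intro nn_integral_cong)
      fix zp b assume zp: "zp \<in> space (?Z J)" and b: "b \<in> space \<xi>"
      have zpb[measurable]: "zp(i:=b) \<in> space (?Z (insert i J))"
        using zp b by (auto simp: space_PiM PiE_def extensional_def)
      show "(\<integral>\<^sup>+r. F (zm(i:=a), zp(i:=b), r) \<partial>?R (insert i J)) =
        (\<integral>\<^sup>+r. \<integral>\<^sup>+\<rho>. F (zm(i:=a), zp(i:=b), r(i:=\<rho>)) \<partial>rademacher \<partial>?R J)"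
        apply (subst R.product_nn_integral_insert[OF J])
         apply measurable
        done
    qed
  qed
  also have "\<dots> = (\<integral>\<^sup>+zm. \<integral>\<^sup>+zp. \<integral>\<^sup>+a. \<integral>\<^sup>+b. \<integral>\<^sup>+r. \<integral>\<^sup>+\<rho>.
           F (zm(i:=a), zp(i:=b), r(i:=\<rho>)) \<partial>rademacher \<partial>?R J \<partial>\<xi> \<partial>\<xi> \<partial>?Z J \<partial>?Z J)"
  proof (rule nn_integral_cong)
    fix zm assume [measurable]: "zm \<in> space (?Z J)"
    show "(\<integral>\<^sup>+a. \<integral>\<^sup>+zp. \<integral>\<^sup>+b. \<integral>\<^sup>+r. \<integral>\<^sup>+\<rho>.
           F (zm(i:=a), zp(i:=b), r(i:=\<rho>)) \<partial>rademacher \<partial>?R J \<partial>\<xi> \<partial>?Z J \<partial>\<xi>) =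
      (\<integral>\<^sup>+zp. \<integral>\<^sup>+a. \<integral>\<^sup>+b. \<integral>\<^sup>+r. \<integral>\<^sup>+\<rho>.
           F (zm(i:=a), zp(i:=b), r(i:=\<rho>)) \<partial>rademacher \<partial>?R J \<partial>\<xi> \<partial>\<xi> \<partial>?Z J)"
      by (rule pZx.Fubini') measurable
  qed
  also have "\<dots> = (\<integral>\<^sup>+zm. \<integral>\<^sup>+zp. \<integral>\<^sup>+a. \<integral>\<^sup>+r. \<integral>\<^sup>+b. \<integral>\<^sup>+\<rho>.
           F (zm(i:=a), zp(i:=b), r(i:=\<rho>)) \<partial>rademacher \<partial>\<xi> \<partial>?R J \<partial>\<xi> \<partial>?Z J \<partial>?Z J)"
  proof (rule nn_integral_cong, rule nn_integral_cong, rule nn_integral_cong)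
    fix zm zp a assume [measurable]: "zm \<in> space (?Z J)" "zp \<in> space (?Z J)" "a \<in> space \<xi>"
    show "(\<integral>\<^sup>+b. \<integral>\<^sup>+r. \<integral>\<^sup>+\<rho>. F (zm(i:=a), zp(i:=b), r(i:=\<rho>)) \<partial>rademacher \<partial>?R J \<partial>\<xi>) =
       (\<integral>\<^sup>+r. \<integral>\<^sup>+b. \<integral>\<^sup>+\<rho>. F (zm(i:=a), zp(i:=b), r(i:=\<rho>)) \<partial>rademacher \<partial>\<xi> \<partial>?R J)"
      by (rule pRx.Fubini') measurable
  qed
  also have "\<dots> = (\<integral>\<^sup>+zm. \<integral>\<^sup>+zp. \<integral>\<^sup>+r. \<integral>\<^sup>+a. \<integral>\<^sup>+b. \<integral>\<^sup>+\<rho>.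
           F (zm(i:=a), zp(i:=b), r(i:=\<rho>)) \<partial>rademacher \<partial>\<xi> \<partial>\<xi> \<partial>?R J \<partial>?Z J \<partial>?Z J)"
  proof (rule nn_integral_cong, rule nn_integral_cong)
    fix zm zp assume [measurable]: "zm \<in> space (?Z J)" "zp \<in> space (?Z J)"
    show "(\<integral>\<^sup>+a. \<integral>\<^sup>+r. \<integral>\<^sup>+b. \<integral>\<^sup>+\<rho>. F (zm(i:=a), zp(i:=b), r(i:=\<rho>)) \<partial>rademacher \<partial>\<xi> \<partial>?R J \<partial>\<xi>) =
       (\<integral>\<^sup>+r. \<integral>\<^sup>+a. \<integral>\<^sup>+b. \<integral>\<^sup>+\<rho>. F (zm(i:=a), zp(i:=b), r(i:=\<rho>)) \<partial>rademacher \<partial>\<xi> \<partial>\<xi> \<partial>?R J)"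
      by (rule pRx.Fubini') measurable
  qed
  finally show ?thesis .
qed


lemma K_sel_meas[measurable]:
  assumes K[measurable]: "K \<in> PiM {..<n} (\<lambda>_. \<xi>) \<rightarrow>\<^sub>M prob_algebra MW"
  shows "(\<lambda>s. K (case s of (zm, zp, r) \<Rightarrow> select_train n zm zp r)) \<in> supersample_base n \<xi> \<rightarrow>\<^sub>M prob_algebra MW"
  unfolding supersample_base_def select_train_selJ
  by measurable

lemma supersample_kernel:
  assumes K[measurable]: "K \<in> PiM {..<n} (\<lambda>_. \<xi>) \<rightarrow>\<^sub>M prob_algebra MW"
  shows "(\<lambda>s. distr (K (case s of (zm, zp, r) \<Rightarrow> select_train n zm zp r))
                   (supersample_base n \<xi> \<Otimes>\<^sub>M MW) (\<lambda>w. (s, w))) \<in> supersample_base n \<xi> \<rightarrow>\<^sub>M prob_algebra (supersample_base n \<xi> \<Otimes>\<^sub>M MW)"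
  using K_sel_meas[OF K] by measurable

lemma prob_base: "prob_space \<xi> \<Longrightarrow> prob_space (supersample_base n \<xi>)"
  unfolding supersample_base_def
  by (intro prob_space_pair prob_space_PiM rad_prob) auto

lemma supersample_facts:
  assumes P: "prob_space \<xi>" and K[measurable]: "K \<in> PiM {..<n} (\<lambda>_. \<xi>) \<rightarrow>\<^sub>M prob_algebra MW"
  shows "prob_space (supersample n \<xi> MW K)" "sets (supersample n \<xi> MW K) = sets (supersample_base n \<xi> \<Otimes>\<^sub>M MW)"
proof -
  have A: "supersample_base n \<xi> \<in> space (prob_algebra (supersample_base n \<xi>))"
    using prob_base[OF P] by (simp add: space_prob_algebra)
  show "prob_space (supersample n \<xi> MW K)"
    unfolding supersample_def by (rule prob_space_bind'[OF A supersample_kernel[OF K]])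
  show "sets (supersample n \<xi> MW K) = sets (supersample_base n \<xi> \<Otimes>\<^sub>M MW)"
    unfolding supersample_def by (rule sets_bind'[OF A supersample_kernel[OF K]])
qed

lemma supersample_int:
  assumes P: "prob_space \<xi>" and K[measurable]: "K \<in> PiM {..<n} (\<lambda>_. \<xi>) \<rightarrow>\<^sub>M prob_algebra MW"
    and f[measurable]: "f \<in> borel_measurable (supersample_base n \<xi> \<Otimes>\<^sub>M MW)"
  shows "(\<integral>\<^sup>+x. f x \<partial>supersample n \<xi> MW K) =
    (\<integral>\<^sup>+zm. \<integral>\<^sup>+zp. \<integral>\<^sup>+r. \<integral>\<^sup>+w. f ((zm, zp, r), w) \<partial>K (select_train n zm zp r)
        \<partial>PiM {..<n} (\<lambda>_. rademacher) \<partial>PiM {..<n} (\<lambda>_. \<xi>) \<partial>PiM {..<n} (\<lambda>_. \<xi>))"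
proof -
  let ?Z = "PiM {..<n} (\<lambda>_. \<xi>)" and ?R = "PiM {..<n} (\<lambda>_. rademacher)"
  interpret Z: prob_space ?Z by (rule prob_space_PiM) (simp add: P)
  interpret R: prob_space ?R by (rule prob_space_PiM) (simp add: rad_prob)
  interpret ZR: pair_prob_space ?Z ?R by unfold_locales
  interpret ZZR: pair_prob_space ?Z "?Z \<Otimes>\<^sub>M ?R" by unfold_locales
  have "(\<integral>\<^sup>+x. f x \<partial>supersample n \<xi> MW K) = (\<integral>\<^sup>+s. \<integral>\<^sup>+w. f (s, w) \<partial>K (case s of (zm, zp, r) \<Rightarrow> select_train n zm zp r) \<partial>supersample_base n \<xi>)"
    unfolding supersample_def
    apply (subst nn_integral_bind[OF f measurable_prob_algebraD[OF supersample_kernel[OF K]]])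
  proof (rule nn_integral_cong)
    fix s assume s: "s \<in> space (supersample_base n \<xi>)"
    have sK: "sets (K (case s of (zm, zp, r) \<Rightarrow> select_train n zm zp r)) = sets MW"
      using measurable_space[OF K_sel_meas[OF K] s] by (simp add: space_prob_algebra)
    have "Pair s \<in> K (case s of (zm, zp, r) \<Rightarrow> select_train n zm zp r) \<rightarrow>\<^sub>M supersample_base n \<xi> \<Otimes>\<^sub>M MW"
      using measurable_Pair1'[OF s, of MW] by (simp add: measurable_cong_sets[OF sK refl])
    then show "integral\<^sup>N (distr (K (case s of (zm, zp, r) \<Rightarrow> select_train n zm zp r)) (supersample_base n \<xi> \<Otimes>\<^sub>M MW) (Pair s)) f =
         (\<integral>\<^sup>+w. f (s, w) \<partial>K (case s of (zm, zp, r) \<Rightarrow> select_train n zm zp r))"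
      by (subst nn_integral_distr) auto
  qed
  also have "\<dots> = (\<integral>\<^sup>+zm. \<integral>\<^sup>+zpr. \<integral>\<^sup>+w. f ((zm, zpr), w) \<partial>K (case zpr of (zp, r) \<Rightarrow> select_train n zm zp r) \<partial>(?Z \<Otimes>\<^sub>M ?R) \<partial>?Z)"
  proof -
    have G: "(\<lambda>s. \<integral>\<^sup>+w. f (s, w) \<partial>K (case s of (zm, zp, r) \<Rightarrow> select_train n zm zp r)) \<in> borel_measurable (supersample_base n \<xi>)"
      by (rule nn_integral_measurable_subprob_algebra2[OF _ measurable_prob_algebraD[OF K_sel_meas[OF K]]]) simp
    show ?thesis
      using sigma_finite_measure.nn_integral_fst[OF prob_space_imp_sigma_finite[OF prob_space_pair[OF Z.prob_space_axioms R.prob_space_axioms]] G[unfolded supersample_base_def]]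
      by (simp add: supersample_base_def split_beta')
  qed
  also have "\<dots> = (\<integral>\<^sup>+zm. \<integral>\<^sup>+zp. \<integral>\<^sup>+r. \<integral>\<^sup>+w. f ((zm, zp, r), w) \<partial>K (select_train n zm zp r) \<partial>?R \<partial>?Z \<partial>?Z)"
  proof (rule nn_integral_cong)
    fix zm assume zm: "zm \<in> space ?Z"
    have G: "(\<lambda>(zp, r). \<integral>\<^sup>+w. f ((zm, zp, r), w) \<partial>K (select_train n zm zp r)) \<in> borel_measurable (?Z \<Otimes>\<^sub>M ?R)"
    proof -
      note zm[measurable] f[unfolded supersample_base_def, measurable]
      have L: "(\<lambda>x. K (select_train n zm (fst x) (snd x))) \<in> ?Z \<Otimes>\<^sub>M ?R \<rightarrow>\<^sub>M subprob_algebra MW"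
        unfolding select_train_selJ by (intro measurable_prob_algebraD) measurable
      have "(\<lambda>x. \<integral>\<^sup>+w. f ((zm, fst x, snd x), w) \<partial>K (select_train n zm (fst x) (snd x))) \<in> borel_measurable (?Z \<Otimes>\<^sub>M ?R)"
        by (rule nn_integral_measurable_subprob_algebra2[OF _ L]) measurable
      then show ?thesis by (simp add: split_beta')
    qed
    show "(\<integral>\<^sup>+zpr. \<integral>\<^sup>+w. f ((zm, zpr), w) \<partial>K (case zpr of (zp, r) \<Rightarrow> select_train n zm zp r) \<partial>(?Z \<Otimes>\<^sub>M ?R)) = 
        (\<integral>\<^sup>+zp. \<integral>\<^sup>+r. \<integral>\<^sup>+w. f ((zm, zp, r), w) \<partial>K (select_train n zm zp r) \<partial>?R \<partial>?Z)"
      using sigma_finite_measure.nn_integral_fst[OF prob_space_imp_sigma_finite[OF R.prob_space_axioms] G] by (simp add: split_beta')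
  qed
  finally show ?thesis .
qed

lemma standard_kernel:
  assumes K[measurable]: "K \<in> PiM {..<n} (\<lambda>_. \<xi>) \<rightarrow>\<^sub>M prob_algebra MW"
  shows "(\<lambda>z. distr (K z) (PiM {..<n} (\<lambda>_. \<xi>) \<Otimes>\<^sub>M MW) (\<lambda>w. (z, w))) \<in> PiM {..<n} (\<lambda>_. \<xi>) \<rightarrow>\<^sub>M prob_algebra (PiM {..<n} (\<lambda>_. \<xi>) \<Otimes>\<^sub>M MW)"
  by measurable

lemma standard_facts:
  assumes P: "prob_space \<xi>" and K[measurable]: "K \<in> PiM {..<n} (\<lambda>_. \<xi>) \<rightarrow>\<^sub>M prob_algebra MW"
  shows "prob_space (standard_law n \<xi> MW K)" "sets (standard_law n \<xi> MW K) = sets (PiM {..<n} (\<lambda>_. \<xi>) \<Otimes>\<^sub>M MW)"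
proof -
  have A: "PiM {..<n} (\<lambda>_. \<xi>) \<in> space (prob_algebra (PiM {..<n} (\<lambda>_. \<xi>)))"
    using P by (simp add: space_prob_algebra prob_space_PiM)
  show "prob_space (standard_law n \<xi> MW K)"
    unfolding standard_law_def by (rule prob_space_bind'[OF A standard_kernel[OF K]])
  show "sets (standard_law n \<xi> MW K) = sets (PiM {..<n} (\<lambda>_. \<xi>) \<Otimes>\<^sub>M MW)"
    unfolding standard_law_def by (rule sets_bind'[OF A standard_kernel[OF K]])
qed

lemma standard_int:
  assumes P: "prob_space \<xi>" and K[measurable]: "K \<in> PiM {..<n} (\<lambda>_. \<xi>) \<rightarrow>\<^sub>M prob_algebra MW"
    and f[measurable]: "f \<in> borel_measurable (PiM {..<n} (\<lambda>_. \<xi>) \<Otimes>\<^sub>M MW)"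
  shows "(\<integral>\<^sup>+x. f x \<partial>standard_law n \<xi> MW K) =
    (\<integral>\<^sup>+z. \<integral>\<^sup>+w. f (z, w) \<partial>K z \<partial>PiM {..<n} (\<lambda>_. \<xi>))"
  unfolding standard_law_def
  apply (subst nn_integral_bind[OF f measurable_prob_algebraD[OF standard_kernel[OF K]]])
proof (rule nn_integral_cong)
  fix s assume s: "s \<in> space (PiM {..<n} (\<lambda>_. \<xi>))"
  have sK: "sets (K s) = sets MW"
    using measurable_space[OF K s] by (simp add: space_prob_algebra)
  have "Pair s \<in> K s \<rightarrow>\<^sub>M PiM {..<n} (\<lambda>_. \<xi>) \<Otimes>\<^sub>M MW"
    using measurable_Pair1'[OF s, of MW] by (simp add: measurable_cong_sets[OF sK refl])
  then show "integral\<^sup>N (distr (K s) (PiM {..<n} (\<lambda>_. \<xi>) \<Otimes>\<^sub>M MW) (\<lambda>w. (s, w))) f = (\<integral>\<^sup>+w. f (s, w) \<partial>K s)"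
    by (subst nn_integral_distr) auto
qed

lemma swap_K:
  assumes P: "prob_space \<xi>" and L: "prob_space L" "sets L = sets MW"
    and g: "g \<in> borel_measurable (\<xi> \<Otimes>\<^sub>M MW)"
  shows "(\<integral>\<^sup>+a. \<integral>\<^sup>+w. g (a, w) \<partial>L \<partial>\<xi>) = (\<integral>\<^sup>+w. \<integral>\<^sup>+a. g (a, w) \<partial>\<xi> \<partial>L)"
proof -
  interpret pair_sigma_finite \<xi> L
    using P L by (simp add: pair_sigma_finite_def prob_space_imp_sigma_finite)
  have g': "g \<in> borel_measurable (\<xi> \<Otimes>\<^sub>M L)"
    using g by (simp add: measurable_cong_sets[OF sets_pair_measure_cong[OF refl L(2)] refl])
  show ?thesis using Fubini[OF g'] by simp
qed

lemma swap_K':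
  assumes P: "prob_space \<xi>" and L: "prob_space L" "sets L = sets MW"
    and g: "g \<in> borel_measurable (\<xi> \<Otimes>\<^sub>M MW)"
  shows "(\<integral>\<^sup>+w. \<integral>\<^sup>+a. g (a, w) \<partial>\<xi> \<partial>L) = (\<integral>\<^sup>+a. \<integral>\<^sup>+w. g (a, w) \<partial>L \<partial>\<xi>)"
  using swap_K[OF assms] by simp


lemma nn_integral_half_add:
  assumes "f \<in> borel_measurable M" "g \<in> borel_measurable M"
  shows "(\<integral>\<^sup>+x. (f x + g x) / 2 \<partial>M) = ((\<integral>\<^sup>+x. f x \<partial>M) + (\<integral>\<^sup>+x. g x \<partial>M)) / 2"
  using assms by (simp add: divide_ennreal_def nn_integral_multc nn_integral_add)

lemma star_lemma:
  assumes P: "prob_space \<xi>" and Lk[measurable]: "Lk \<in> \<xi> \<rightarrow>\<^sub>M prob_algebra MW"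
    and f[measurable]: "f \<in> borel_measurable (MW \<Otimes>\<^sub>M (count_space UNIV \<Otimes>\<^sub>M (\<xi> \<Otimes>\<^sub>M \<xi>)))"
  shows "(\<integral>\<^sup>+a. \<integral>\<^sup>+b. \<integral>\<^sup>+\<rho>. \<integral>\<^sup>+w. f (w, \<rho>, (a, b)) \<partial>Lk (if \<rho> = 1 then b else a) \<partial>rademacher \<partial>\<xi> \<partial>\<xi>)
    = (\<integral>\<^sup>+y. \<integral>\<^sup>+w. ((\<integral>\<^sup>+a. f (w, 1, (a, y)) \<partial>\<xi>) + (\<integral>\<^sup>+a. f (w, -1, (y, a)) \<partial>\<xi>)) / 2 \<partial>Lk y \<partial>\<xi>)"
proof -
  interpret xi: prob_space \<xi> by fact
  interpret pxx: pair_sigma_finite \<xi> \<xi> by unfold_locales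
  have Lk'[measurable]: "Lk \<in> \<xi> \<rightarrow>\<^sub>M subprob_algebra MW" by (rule measurable_prob_algebraD[OF Lk])
  have Ly: "prob_space (Lk y)" "sets (Lk y) = sets MW" if "y \<in> space \<xi>" for y
    using measurable_space[OF Lk that] by (auto simp: space_prob_algebra)
  define T1 where "T1 a b = (\<integral>\<^sup>+w. f (w, 1, (a, b)) \<partial>Lk b)" for a b
  define T2 where "T2 a b = (\<integral>\<^sup>+w. f (w, -1, (a, b)) \<partial>Lk a)" for a b
  have T1m[measurable]: "(\<lambda>(a, b). T1 a b) \<in> borel_measurable (\<xi> \<Otimes>\<^sub>M \<xi>)"
  proof -
    have "(\<lambda>x. \<integral>\<^sup>+w. f (w, 1, (fst x, snd x)) \<partial>Lk (snd x)) \<in> borel_measurable (\<xi> \<Otimes>\<^sub>M \<xi>)"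
      by (rule nn_integral_measurable_subprob_algebra2[where N=MW]) measurable
    then show ?thesis by (simp add: T1_def split_beta')
  qed
  have T2m[measurable]: "(\<lambda>(a, b). T2 a b) \<in> borel_measurable (\<xi> \<Otimes>\<^sub>M \<xi>)"
  proof -
    have "(\<lambda>x. \<integral>\<^sup>+w. f (w, -1, (fst x, snd x)) \<partial>Lk (fst x)) \<in> borel_measurable (\<xi> \<Otimes>\<^sub>M \<xi>)"
      by (rule nn_integral_measurable_subprob_algebra2[where N=MW]) measurable
    then show ?thesis by (simp add: T2_def split_beta')
  qed
  have "(\<integral>\<^sup>+a. \<integral>\<^sup>+b. \<integral>\<^sup>+\<rho>. \<integral>\<^sup>+w. f (w, \<rho>, (a, b)) \<partial>Lk (if \<rho> = 1 then b else a) \<partial>rademacher \<partial>\<xi> \<partial>\<xi>)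
      = (\<integral>\<^sup>+a. \<integral>\<^sup>+b. (T1 a b + T2 a b) / 2 \<partial>\<xi> \<partial>\<xi>)"
    by (simp add: nn_integral_rad T1_def T2_def)
  also have "\<dots> = ((\<integral>\<^sup>+a. \<integral>\<^sup>+b. T1 a b \<partial>\<xi> \<partial>\<xi>) + (\<integral>\<^sup>+a. \<integral>\<^sup>+b. T2 a b \<partial>\<xi> \<partial>\<xi>)) / 2"
    apply (subst nn_integral_cong[OF nn_integral_half_add])
      apply measurable
    apply (subst nn_integral_half_add)
      apply measurable
    done
  also have "(\<integral>\<^sup>+a. \<integral>\<^sup>+b. T1 a b \<partial>\<xi> \<partial>\<xi>) = (\<integral>\<^sup>+y. \<integral>\<^sup>+w. \<integral>\<^sup>+a. f (w, 1, (a, y)) \<partial>\<xi> \<partial>Lk y \<partial>\<xi>)"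
  proof -
    have "(\<integral>\<^sup>+a. \<integral>\<^sup>+b. T1 a b \<partial>\<xi> \<partial>\<xi>) = (\<integral>\<^sup>+b. \<integral>\<^sup>+a. T1 a b \<partial>\<xi> \<partial>\<xi>)"
      by (rule pxx.Fubini'[symmetric]) measurable
    also have "\<dots> = (\<integral>\<^sup>+y. \<integral>\<^sup>+w. \<integral>\<^sup>+a. f (w, 1, (a, y)) \<partial>\<xi> \<partial>Lk y \<partial>\<xi>)"
      unfolding T1_def
    proof (rule nn_integral_cong)
      fix b assume b[measurable]: "b \<in> space \<xi>"
      show "(\<integral>\<^sup>+a. \<integral>\<^sup>+w. f (w, 1, (a, b)) \<partial>Lk b \<partial>\<xi>) = (\<integral>\<^sup>+w. \<integral>\<^sup>+a. f (w, 1, (a, b)) \<partial>\<xi> \<partial>Lk b)"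
        using swap_K[OF P Ly[OF b], of "\<lambda>(a, w). f (w, 1, (a, b))"] by simp
    qed
    finally show ?thesis .
  qed
  also have "(\<integral>\<^sup>+a. \<integral>\<^sup>+b. T2 a b \<partial>\<xi> \<partial>\<xi>) = (\<integral>\<^sup>+y. \<integral>\<^sup>+w. \<integral>\<^sup>+a. f (w, -1, (y, a)) \<partial>\<xi> \<partial>Lk y \<partial>\<xi>)"
    unfolding T2_def
  proof (rule nn_integral_cong)
    fix a assume a[measurable]: "a \<in> space \<xi>"
    show "(\<integral>\<^sup>+b. \<integral>\<^sup>+w. f (w, -1, (a, b)) \<partial>Lk a \<partial>\<xi>) = (\<integral>\<^sup>+w. \<integral>\<^sup>+b. f (w, -1, (a, b)) \<partial>\<xi> \<partial>Lk a)"
      using swap_K[OF P Ly[OF a], of "\<lambda>(b, w). f (w, -1, (a, b))"] by simp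
  qed
  also have "((\<integral>\<^sup>+y. \<integral>\<^sup>+w. \<integral>\<^sup>+a. f (w, 1, (a, y)) \<partial>\<xi> \<partial>Lk y \<partial>\<xi>) + (\<integral>\<^sup>+y. \<integral>\<^sup>+w. \<integral>\<^sup>+a. f (w, -1, (y, a)) \<partial>\<xi> \<partial>Lk y \<partial>\<xi>)) / 2
     = (\<integral>\<^sup>+y. \<integral>\<^sup>+w. ((\<integral>\<^sup>+a. f (w, 1, (a, y)) \<partial>\<xi>) + (\<integral>\<^sup>+a. f (w, -1, (y, a)) \<partial>\<xi>)) / 2 \<partial>Lk y \<partial>\<xi>)"
  proof -
    have "(\<integral>\<^sup>+y. \<integral>\<^sup>+w. ((\<integral>\<^sup>+a. f (w, 1, (a, y)) \<partial>\<xi>) + (\<integral>\<^sup>+a. f (w, -1, (y, a)) \<partial>\<xi>)) / 2 \<partial>Lk y \<partial>\<xi>) = (\<integral>\<^sup>+y. ((\<integral>\<^sup>+w. \<integral>\<^sup>+a. f (w, 1, (a, y)) \<partial>\<xi> \<partial>Lk y) + (\<integral>\<^sup>+w. \<integral>\<^sup>+a. f (w, -1, (y, a)) \<partial>\<xi> \<partial>Lk y)) / 2 \<partial>\<xi>)"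
    proof (rule nn_integral_cong)
      fix y assume y[measurable]: "y \<in> space \<xi>"
      note cong = measurable_cong_sets[OF Ly(2)[OF y] refl]
      show "(\<integral>\<^sup>+w. ((\<integral>\<^sup>+a. f (w, 1, (a, y)) \<partial>\<xi>) + (\<integral>\<^sup>+a. f (w, -1, (y, a)) \<partial>\<xi>)) / 2 \<partial>Lk y)
        = ((\<integral>\<^sup>+w. \<integral>\<^sup>+a. f (w, 1, (a, y)) \<partial>\<xi> \<partial>Lk y) + (\<integral>\<^sup>+w. \<integral>\<^sup>+a. f (w, -1, (y, a)) \<partial>\<xi> \<partial>Lk y)) / 2"
        by (rule nn_integral_half_add) (simp_all only: cong, measurable)
    qed
    also have "\<dots> = ((\<integral>\<^sup>+y. \<integral>\<^sup>+w. \<integral>\<^sup>+a. f (w, 1, (a, y)) \<partial>\<xi> \<partial>Lk y \<partial>\<xi>) + (\<integral>\<^sup>+y. \<integral>\<^sup>+w. \<integral>\<^sup>+a. f (w, -1, (y, a)) \<partial>\<xi> \<partial>Lk y \<partial>\<xi>)) / 2"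
    proof (rule nn_integral_half_add)
      show "(\<lambda>y. \<integral>\<^sup>+w. \<integral>\<^sup>+a. f (w, 1, (a, y)) \<partial>\<xi> \<partial>Lk y) \<in> borel_measurable \<xi>"
        by (rule nn_integral_measurable_subprob_algebra2[where N=MW]) measurable
      show "(\<lambda>y. \<integral>\<^sup>+w. \<integral>\<^sup>+a. f (w, -1, (y, a)) \<partial>\<xi> \<partial>Lk y) \<in> borel_measurable \<xi>"
        by (rule nn_integral_measurable_subprob_algebra2[where N=MW]) measurable
    qed
    finally show ?thesis by simp
  qed
  finally show ?thesis .
qed


lemma rad_component_count:
  "i \<in> I \<Longrightarrow> (\<lambda>x. x i) \<in> PiM I (\<lambda>_. rademacher) \<rightarrow>\<^sub>M count_space UNIV"
proof -
  assume i: "i \<in> I"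
  have e: "sets rademacher = sets (count_space (UNIV::int set))" by simp
  show ?thesis
    using measurable_component_singleton[OF i, of "\<lambda>_. rademacher"]
    unfolding measurable_cong_sets[OF refl e] .
qed

definition Phi :: "'z measure \<Rightarrow> ('w \<times> int \<times> 'z \<times> 'z \<Rightarrow> ennreal) \<Rightarrow> 'w \<Rightarrow> 'z \<Rightarrow> ennreal" where
  "Phi \<xi> f w y = ((\<integral>\<^sup>+a. f (w, 1, (a, y)) \<partial>\<xi>) + (\<integral>\<^sup>+a. f (w, -1, (y, a)) \<partial>\<xi>)) / 2"

lemma Phi_measurable[measurable]:
  assumes P: "prob_space \<xi>" and f[measurable]: "f \<in> borel_measurable (MW \<Otimes>\<^sub>M (count_space UNIV \<Otimes>\<^sub>M (\<xi> \<Otimes>\<^sub>M \<xi>)))"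
  shows "(\<lambda>(w, y). Phi \<xi> f w y) \<in> borel_measurable (MW \<Otimes>\<^sub>M \<xi>)"
proof -
  interpret xi: prob_space \<xi> by fact
  show ?thesis unfolding Phi_def by measurable
qed

lemma stepA:
  assumes P: "prob_space \<xi>" and K[measurable]: "K \<in> PiM {..<n} (\<lambda>_. \<xi>) \<rightarrow>\<^sub>M prob_algebra MW"
    and i: "i < n"
    and f[measurable]: "f \<in> borel_measurable (MW \<Otimes>\<^sub>M (count_space UNIV \<Otimes>\<^sub>M (\<xi> \<Otimes>\<^sub>M \<xi>)))"
  shows "(\<integral>\<^sup>+x. f (snd x, case fst x of (zm, zp, r) \<Rightarrow> r i, case fst x of (zm, zp, r) \<Rightarrow> (zm i, zp i)) \<partial>supersample n \<xi> MW K)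
    = (\<integral>\<^sup>+x. Phi \<xi> f (snd x) (fst x i) \<partial>standard_law n \<xi> MW K)"
proof -
  interpret xi: prob_space \<xi> by fact
  have iI[measurable]: "i \<in> {..<n}" using i by simp
  define J where "J = {..<n} - {i}"
  have J: "finite J" "i \<notin> J" and IJ: "{..<n} = insert i J" using i by (auto simp: J_def)
  let ?Z = "\<lambda>J. PiM J (\<lambda>_. \<xi>)" and ?R = "\<lambda>J. PiM J (\<lambda>_. rademacher)"
  interpret Zp: product_sigma_finite "\<lambda>_. \<xi>"
    by (simp add: product_sigma_finite_def P prob_space_imp_sigma_finite)
  interpret ZJ: prob_space "?Z J" by (rule prob_space_PiM) (simp add: P)
  have Phim[measurable]: "(\<lambda>(w, y). Phi \<xi> f w y) \<in> borel_measurable (MW \<Otimes>\<^sub>M \<xi>)"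
    by (rule Phi_measurable[OF P f])
  have [measurable]: "(\<lambda>x. x i) \<in> PiM (insert i J) (\<lambda>_. rademacher) \<rightarrow>\<^sub>M count_space UNIV"
    by (rule rad_component_count) simp
  have [measurable]: "(\<lambda>x. x i) \<in> PiM {..<n} (\<lambda>_. rademacher) \<rightarrow>\<^sub>M count_space UNIV"
    by (rule rad_component_count) (simp add: i)
  have "(\<integral>\<^sup>+x. f (snd x, case fst x of (zm, zp, r) \<Rightarrow> r i, case fst x of (zm, zp, r) \<Rightarrow> (zm i, zp i)) \<partial>supersample n \<xi> MW K)
    = (\<integral>\<^sup>+zm. \<integral>\<^sup>+zp. \<integral>\<^sup>+r. \<integral>\<^sup>+w. f (w, r i, (zm i, zp i)) \<partial>K (select_train n zm zp r)
        \<partial>?R {..<n} \<partial>?Z {..<n} \<partial>?Z {..<n})"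
    by (subst supersample_int[OF P K]) (simp_all add: supersample_base_def)
  also have "\<dots> = (\<integral>\<^sup>+zm. \<integral>\<^sup>+zp. \<integral>\<^sup>+r. (\<lambda>(zm, zp, r). \<integral>\<^sup>+w. f (w, r i, (zm i, zp i)) \<partial>K (selJ (insert i J) zm zp r)) (zm, zp, r)
        \<partial>?R (insert i J) \<partial>?Z (insert i J) \<partial>?Z (insert i J))"
    by (simp add: IJ select_train_selJ)
  also have "\<dots> = (\<integral>\<^sup>+zm. \<integral>\<^sup>+zp. \<integral>\<^sup>+r. \<integral>\<^sup>+a. \<integral>\<^sup>+b. \<integral>\<^sup>+\<rho>.
       (\<lambda>(zm, zp, r). \<integral>\<^sup>+w. f (w, r i, (zm i, zp i)) \<partial>K (selJ (insert i J) zm zp r)) (zm(i:=a), zp(i:=b), r(i:=\<rho>))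
        \<partial>rademacher \<partial>\<xi> \<partial>\<xi> \<partial>?R J \<partial>?Z J \<partial>?Z J)"
  proof (rule split3[OF P J])
    have K'[measurable]: "K \<in> ?Z (insert i J) \<rightarrow>\<^sub>M subprob_algebra MW"
      using measurable_prob_algebraD[OF K] by (simp add: IJ)
    have "(\<lambda>x. \<integral>\<^sup>+w. f (w, snd (snd x) i, (fst x i, fst (snd x) i)) \<partial>K (selJ (insert i J) (fst x) (fst (snd x)) (snd (snd x))))
      \<in> borel_measurable (?Z (insert i J) \<Otimes>\<^sub>M ?Z (insert i J) \<Otimes>\<^sub>M ?R (insert i J))"
      by (rule nn_integral_measurable_subprob_algebra2[where N=MW]) measurable
    then show "(\<lambda>(zm, zp, r). \<integral>\<^sup>+w. f (w, r i, (zm i, zp i)) \<partial>K (selJ (insert i J) zm zp r))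
      \<in> borel_measurable (?Z (insert i J) \<Otimes>\<^sub>M ?Z (insert i J) \<Otimes>\<^sub>M ?R (insert i J))"
      by (simp add: split_beta')
  qed
  also have "\<dots> = (\<integral>\<^sup>+zm. \<integral>\<^sup>+zp. \<integral>\<^sup>+r. (\<lambda>X. \<integral>\<^sup>+y. \<integral>\<^sup>+w. Phi \<xi> f w y \<partial>K (X(i:=y)) \<partial>\<xi>) (selJ J zm zp r)
        \<partial>?R J \<partial>?Z J \<partial>?Z J)"
  proof (rule nn_integral_cong, rule nn_integral_cong, rule nn_integral_cong)
    fix zm zp r assume "zm \<in> space (?Z J)" "zp \<in> space (?Z J)" "r \<in> space (?R J)"
    then have X: "selJ J zm zp r \<in> space (?Z J)"
      using measurable_space[OF measurable_selJ[of fst "?Z J \<Otimes>\<^sub>M ?Z J \<Otimes>\<^sub>M ?R J" J \<xi> "\<lambda>x. fst (snd x)" "\<lambda>x. snd (snd x)"], of "(zm, zp, r)"]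
      by (simp add: space_pair_measure)
    have Lk: "(\<lambda>y. K ((selJ J zm zp r)(i:=y))) \<in> \<xi> \<rightarrow>\<^sub>M prob_algebra MW"
      using measurable_comp[OF measurable_component_update[OF X J(2)] K[unfolded IJ]] by (simp add: comp_def)
    show "(\<integral>\<^sup>+a. \<integral>\<^sup>+b. \<integral>\<^sup>+\<rho>.
       (\<lambda>(zm, zp, r). \<integral>\<^sup>+w. f (w, r i, (zm i, zp i)) \<partial>K (selJ (insert i J) zm zp r)) (zm(i:=a), zp(i:=b), r(i:=\<rho>))
        \<partial>rademacher \<partial>\<xi> \<partial>\<xi>) = (\<lambda>X. \<integral>\<^sup>+y. \<integral>\<^sup>+w. Phi \<xi> f w y \<partial>K (X(i:=y)) \<partial>\<xi>) (selJ J zm zp r)"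
      using star_lemma[OF P Lk f] by (simp add: selJ_insert J(2) Phi_def)
  qed
  also have "\<dots> = (\<integral>\<^sup>+X. (\<lambda>X. \<integral>\<^sup>+y. (\<lambda>z. \<integral>\<^sup>+w. Phi \<xi> f w (z i) \<partial>K z) (X(i:=y)) \<partial>\<xi>) X \<partial>?Z J)"
  proof -
    have K'[measurable]: "K \<in> ?Z (insert i J) \<rightarrow>\<^sub>M subprob_algebra MW"
      using measurable_prob_algebraD[OF K] by (simp add: IJ)
    have G[measurable]: "(\<lambda>z. \<integral>\<^sup>+w. Phi \<xi> f w (z i) \<partial>K z) \<in> borel_measurable (?Z (insert i J))"
      by (rule nn_integral_measurable_subprob_algebra2[where N=MW]) measurable
    have Hm[measurable]: "(\<lambda>X. \<integral>\<^sup>+y. (\<lambda>z. \<integral>\<^sup>+w. Phi \<xi> f w (z i) \<partial>K z) (X(i:=y)) \<partial>\<xi>) \<in> borel_measurable (?Z J)"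
      using measurable_add_dim[of i J "\<lambda>_. \<xi>"] by measurable
    show ?thesis
      using sel_iid[OF P J(1) Hm] by simp
  qed
  also have "\<dots> = (\<integral>\<^sup>+z. \<integral>\<^sup>+w. Phi \<xi> f w (z i) \<partial>K z \<partial>?Z {..<n})"
  proof -
    have K'[measurable]: "K \<in> ?Z (insert i J) \<rightarrow>\<^sub>M subprob_algebra MW"
      using measurable_prob_algebraD[OF K] by (simp add: IJ)
    have G[measurable]: "(\<lambda>z. \<integral>\<^sup>+w. Phi \<xi> f w (z i) \<partial>K z) \<in> borel_measurable (?Z (insert i J))"
      by (rule nn_integral_measurable_subprob_algebra2[where N=MW]) measurable
    show ?thesis unfolding IJ
      by (rule Zp.product_nn_integral_insert[OF J G, symmetric])
  qed
  also have "\<dots> = (\<integral>\<^sup>+x. Phi \<xi> f (snd x) (fst x i) \<partial>standard_law n \<xi> MW K)"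
    by (subst standard_int[OF P K]) (simp_all add: split_beta')
  finally show ?thesis .
qed


lemma enn2ereal_fin: "x \<noteq> \<top> \<Longrightarrow> enn2ereal x = ereal (enn2real x)"
  by (cases x rule: ennreal_cases) (auto simp: enn2ereal_ennreal)

lemma KL_ineq:
  fixes hr kr :: "'a \<Rightarrow> real"
  assumes P: "prob_space M" and [measurable]: "hr \<in> borel_measurable M" "kr \<in> borel_measurable M"
    and h0: "\<And>x. 0 \<le> hr x" and hk: "\<And>x. hr x \<le> 2 * kr x" and hpos: "AE x in M. 0 < hr x"
    and ik: "(\<integral>\<^sup>+x. ennreal (1 / kr x) \<partial>M) \<le> 1"
    and Rnfin: "(\<integral>\<^sup>+x. ennreal (- ln (hr x)) \<partial>M) \<noteq> \<infinity>"
  shows "enn2ereal (\<integral>\<^sup>+x. ennreal (ln (hr x / kr x)) \<partial>M) - enn2ereal (\<integral>\<^sup>+x. ennreal (- ln (hr x / kr x)) \<partial>M)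
       \<le> enn2ereal (\<integral>\<^sup>+x. ennreal (ln (hr x)) \<partial>M) - enn2ereal (\<integral>\<^sup>+x. ennreal (- ln (hr x)) \<partial>M)"
proof -
  interpret prob_space M by fact
  have k0: "0 \<le> kr x" for x using h0[of x] hk[of x] by linarith
  have ratio_le: "ln (hr x / kr x) \<le> 1" for x
  proof (cases "hr x = 0")
    case True then show ?thesis by simp
  next
    case False
    then have "0 < hr x" "0 < kr x" using h0[of x] hk[of x] by linarith+
    then have "hr x / kr x \<le> 2" "0 < hr x / kr x" using hk[of x] by (auto simp: divide_le_eq)
    then have "ln (hr x / kr x) \<le> hr x / kr x - 1" by (intro ln_le_minus_one)
    with \<open>hr x / kr x \<le> 2\<close> show ?thesis by linarith
  qed
  have Lpfin: "(\<integral>\<^sup>+x. ennreal (ln (hr x / kr x)) \<partial>M) \<noteq> \<infinity>"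
  proof -
    have "(\<integral>\<^sup>+x. ennreal (ln (hr x / kr x)) \<partial>M) \<le> (\<integral>\<^sup>+x. 1 \<partial>M)"
      using ratio_le by (intro nn_integral_mono) (simp add: ennreal_le_1)
    also have "\<dots> = 1" by (simp add: emeasure_space_1)
    finally show ?thesis by (auto simp: top_unique)
  qed
  show ?thesis
  proof (cases "(\<integral>\<^sup>+x. ennreal (ln (hr x)) \<partial>M) = \<infinity>")
    case True
    then show ?thesis using Rnfin by (cases "(\<integral>\<^sup>+x. ennreal (- ln (hr x)) \<partial>M)") auto
  next
    case Rpfin: False
    have intR: "integrable M (\<lambda>x. ln (hr x))"
      using Rpfin Rnfin by (simp add: real_integrable_def)
    have RHS: "enn2ereal (\<integral>\<^sup>+x. ennreal (ln (hr x)) \<partial>M) - enn2ereal (\<integral>\<^sup>+x. ennreal (- ln (hr x)) \<partial>M)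
        = ereal (\<integral>x. ln (hr x) \<partial>M)"
      using Rpfin Rnfin by (simp add: real_lebesgue_integral_def[OF intR] enn2ereal_fin)
    show ?thesis
    proof (cases "(\<integral>\<^sup>+x. ennreal (- ln (hr x / kr x)) \<partial>M) = \<infinity>")
      case True
      then show ?thesis using Lpfin by (simp add: enn2ereal_fin RHS)
    next
      case Lnfin: False
      have intL: "integrable M (\<lambda>x. ln (hr x / kr x))"
        using Lpfin Lnfin by (simp add: real_integrable_def)
      have LHS: "enn2ereal (\<integral>\<^sup>+x. ennreal (ln (hr x / kr x)) \<partial>M) - enn2ereal (\<integral>\<^sup>+x. ennreal (- ln (hr x / kr x)) \<partial>M)
        = ereal (\<integral>x. ln (hr x / kr x) \<partial>M)"
        using Lpfin Lnfin by (simp add: real_lebesgue_integral_def[OF intL] enn2ereal_fin)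
      have intK: "integrable M (\<lambda>x. 1 / kr x)"
      proof (rule integrableI_nn_integral_finite)
        show "AE x in M. 0 \<le> 1 / kr x" using k0 by simp
        show "(\<integral>\<^sup>+x. ennreal (1 / kr x) \<partial>M) = ennreal (enn2real (\<integral>\<^sup>+x. ennreal (1 / kr x) \<partial>M))"
        proof -
          have "(\<integral>\<^sup>+x. ennreal (1 / kr x) \<partial>M) < \<top>"
            using ik by (metis ennreal_one_less_top order.strict_trans1)
          then show ?thesis by simp
        qed
      qed simp
      have "(\<integral>x. ln (hr x / kr x) \<partial>M) \<le> (\<integral>x. ln (hr x) + (1 / kr x - 1) \<partial>M)"
      proof (rule integral_mono_AE[OF intL])
        show "integrable M (\<lambda>x. ln (hr x) + (1 / kr x - 1))"
          using intR intK by auto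
        show "AE x in M. ln (hr x / kr x) \<le> ln (hr x) + (1 / kr x - 1)"
          using hpos
        proof eventually_elim
          case (elim x)
          then have "0 < kr x" using hk[of x] by linarith
          have "ln (1 / kr x) \<le> 1 / kr x - 1" using \<open>0 < kr x\<close> by (intro ln_le_minus_one) simp
          then show ?case using elim \<open>0 < kr x\<close> by (simp add: ln_div)
        qed
      qed
      also have "\<dots> = (\<integral>x. ln (hr x) \<partial>M) + ((\<integral>x. 1 / kr x \<partial>M) - 1)"
        using intR intK by (simp add: prob_space)
      also have "\<dots> \<le> (\<integral>x. ln (hr x) \<partial>M)"
      proof -
        have "(\<integral>x. 1 / kr x \<partial>M) = enn2real (\<integral>\<^sup>+x. ennreal (1 / kr x) \<partial>M)"
          using k0 by (intro integral_eq_nn_integral) auto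
        also have "\<dots> \<le> 1" using ik by (simp add: enn2real_leI)
        finally show ?thesis by simp
      qed
      finally show ?thesis using LHS RHS by simp
    qed
  qed
qed


locale SSetup =
  fixes n :: nat and \<xi> :: "'z measure" and MW :: "'w measure"
    and K :: "(nat \<Rightarrow> 'z) \<Rightarrow> 'w measure" and i :: nat
  assumes P: "prob_space \<xi>"
    and K[measurable]: "K \<in> PiM {..<n} (\<lambda>_. \<xi>) \<rightarrow>\<^sub>M prob_algebra MW"
    and i: "i < n"
begin

abbreviation "SS \<equiv> supersample n \<xi> MW K"
abbreviation "SL \<equiv> standard_law n \<xi> MW K"
abbreviation "X3 \<equiv> MW \<Otimes>\<^sub>M (count_space (UNIV::int set) \<Otimes>\<^sub>M (\<xi> \<Otimes>\<^sub>M \<xi>))"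

definition F3 :: "(((nat \<Rightarrow> 'z) \<times> (nat \<Rightarrow> 'z) \<times> (nat \<Rightarrow> int)) \<times> 'w) \<Rightarrow> 'w \<times> int \<times> 'z \<times> 'z" where
  "F3 \<omega> = (snd \<omega>, case fst \<omega> of (zm, zp, r) \<Rightarrow> r i, case fst \<omega> of (zm, zp, r) \<Rightarrow> (zm i, zp i))"

definition "P3 = distr SS X3 F3"
definition "P2 = distr SL (MW \<Otimes>\<^sub>M \<xi>) (\<lambda>\<omega>. (snd \<omega>, fst \<omega> i))"
definition "PW = distr SL MW snd"
definition "PY = distr SL \<xi> (\<lambda>\<omega>. fst \<omega> i)"

lemma xi_prob: "prob_space \<xi>" by (rule P)

lemma SS_prob: "prob_space SS" and sets_SS[measurable_cong]: "sets SS = sets ((PiM {..<n} (\<lambda>_. \<xi>) \<Otimes>\<^sub>M PiM {..<n} (\<lambda>_. \<xi>) \<Otimes>\<^sub>M PiM {..<n} (\<lambda>_. rademacher)) \<Otimes>\<^sub>M MW)"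
  using supersample_facts[OF P K] by (auto simp: supersample_base_def)

lemma SL_prob: "prob_space SL" and sets_SL[measurable_cong]: "sets SL = sets (PiM {..<n} (\<lambda>_. \<xi>) \<Otimes>\<^sub>M MW)"
  using standard_facts[OF P K] by auto

lemma iI[measurable]: "i \<in> {..<n}" using i by simp

lemma rad_i[measurable]: "(\<lambda>x. x i) \<in> PiM {..<n} (\<lambda>_. rademacher) \<rightarrow>\<^sub>M count_space UNIV"
  by (rule rad_component_count) (simp add: i)

lemma F3_meas[measurable]: "F3 \<in> SS \<rightarrow>\<^sub>M X3"
  unfolding F3_def by measurable

lemma P3_prob: "prob_space P3" unfolding P3_def
  by (rule prob_space.prob_space_distr[OF SS_prob F3_meas])

lemma sets_P3[measurable_cong]: "sets P3 = sets X3" unfolding P3_def by simp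

lemma P2_prob: "prob_space P2" unfolding P2_def
  by (rule prob_space.prob_space_distr[OF SL_prob]) measurable

lemma sets_P2[measurable_cong]: "sets P2 = sets (MW \<Otimes>\<^sub>M \<xi>)" unfolding P2_def by simp

lemma PW_prob: "prob_space PW" unfolding PW_def
  by (rule prob_space.prob_space_distr[OF SL_prob]) measurable

lemma sets_PW[measurable_cong]: "sets PW = sets MW" unfolding PW_def by simp

lemma stepA_P3:
  assumes f[measurable]: "f \<in> borel_measurable X3"
  shows "(\<integral>\<^sup>+x. f x \<partial>P3) = (\<integral>\<^sup>+x. Phi \<xi> f (fst x) (snd x) \<partial>P2)"
proof -
  have Phim[measurable]: "(\<lambda>(w, y). Phi \<xi> f w y) \<in> borel_measurable (MW \<Otimes>\<^sub>M \<xi>)"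
    by (rule Phi_measurable[OF P f])
  have "(\<integral>\<^sup>+x. f x \<partial>P3) = (\<integral>\<^sup>+x. f (F3 x) \<partial>SS)"
    unfolding P3_def by (rule nn_integral_distr) measurable
  also have "\<dots> = (\<integral>\<^sup>+x. Phi \<xi> f (snd x) (fst x i) \<partial>SL)"
    unfolding F3_def by (rule stepA[OF P K i f])
  also have "\<dots> = (\<integral>\<^sup>+x. Phi \<xi> f (fst x) (snd x) \<partial>P2)"
    unfolding P2_def by (subst nn_integral_distr) (simp_all add: split_beta')
  finally show ?thesis .
qed

lemma SL_component:
  assumes G[measurable]: "G \<in> borel_measurable \<xi>"
  shows "(\<integral>\<^sup>+x. G (fst x i) \<partial>SL) = (\<integral>\<^sup>+y. G y \<partial>\<xi>)"
proof -
  define J where "J = {..<n} - {i}"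
  have J: "finite J" "i \<notin> J" and IJ: "{..<n} = insert i J" using i by (auto simp: J_def)
  interpret Zp: product_sigma_finite "\<lambda>_. \<xi>"
    by (simp add: product_sigma_finite_def P prob_space_imp_sigma_finite)
  interpret ZJ: prob_space "PiM J (\<lambda>_. \<xi>)" by (rule prob_space_PiM) (simp add: P)
  have "(\<integral>\<^sup>+x. G (fst x i) \<partial>SL) = (\<integral>\<^sup>+z. \<integral>\<^sup>+w. G (z i) \<partial>K z \<partial>PiM {..<n} (\<lambda>_. \<xi>))"
    by (subst standard_int[OF P K]) simp_all
  also have "\<dots> = (\<integral>\<^sup>+z. G (z i) \<partial>PiM {..<n} (\<lambda>_. \<xi>))"
  proof (rule nn_integral_cong)
    fix z assume z: "z \<in> space (PiM {..<n} (\<lambda>_. \<xi>))"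
    have "prob_space (K z)" using measurable_space[OF K z] by (simp add: space_prob_algebra)
    then show "(\<integral>\<^sup>+w. G (z i) \<partial>K z) = G (z i)" by (simp add: prob_space.emeasure_space_1)
  qed
  also have "\<dots> = (\<integral>\<^sup>+X. \<integral>\<^sup>+y. G y \<partial>\<xi> \<partial>PiM J (\<lambda>_. \<xi>))"
    unfolding IJ by (subst Zp.product_nn_integral_insert[OF J]) simp_all
  also have "\<dots> = (\<integral>\<^sup>+y. G y \<partial>\<xi>)"
    by (simp add: ZJ.emeasure_space_1)
  finally show ?thesis .
qed

lemma PY_xi: "PY = \<xi>"
proof (rule measure_eqI)
  show "sets PY = sets \<xi>" by (simp add: PY_def)
  fix A assume A[measurable]: "A \<in> sets PY"
  then have A'[measurable]: "A \<in> sets \<xi>" by (simp add: PY_def)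
  have "emeasure PY A = (\<integral>\<^sup>+x. indicator A x \<partial>PY)" by simp
  also have "\<dots> = (\<integral>\<^sup>+x. indicator A (fst x i) \<partial>SL)"
    unfolding PY_def by (subst nn_integral_distr) simp_all
  also have "\<dots> = (\<integral>\<^sup>+x. indicator A x \<partial>\<xi>)"
    by (rule SL_component) simp
  finally show "emeasure PY A = emeasure \<xi> A" by simp
qed

lemma P2_snd:
  assumes G[measurable]: "G \<in> borel_measurable \<xi>"
  shows "(\<integral>\<^sup>+x. G (snd x) \<partial>P2) = (\<integral>\<^sup>+y. G y \<partial>\<xi>)"
  unfolding P2_def by (subst nn_integral_distr) (simp_all add: SL_component)

lemma emeasure_rad: "emeasure rademacher B = (indicator B 1 + indicator B (-1)) / 2"
  using nn_integral_rad[of "indicator B"] by simp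

lemma E1:
  assumes C[measurable]: "C \<in> sets (\<xi> \<Otimes>\<^sub>M \<xi>)"
  shows "emeasure P3 (space MW \<times> B \<times> C) = emeasure rademacher B * emeasure (\<xi> \<Otimes>\<^sub>M \<xi>) C"
proof -
  interpret xi: prob_space \<xi> by (rule P)
  interpret pxx: pair_sigma_finite \<xi> \<xi> by unfold_locales
  have Bm[measurable]: "B \<in> sets (count_space (UNIV::int set))" by simp
  have S[measurable]: "space MW \<times> B \<times> C \<in> sets X3" by measurable
  have "emeasure P3 (space MW \<times> B \<times> C) = (\<integral>\<^sup>+x. indicator (space MW \<times> B \<times> C) x \<partial>P3)"
    by (simp add: sets_P3)
  also have "\<dots> = (\<integral>\<^sup>+x. Phi \<xi> (indicator (space MW \<times> B \<times> C)) (fst x) (snd x) \<partial>P2)"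
    by (rule stepA_P3) measurable
  also have "\<dots> = (\<integral>\<^sup>+x. (\<lambda>y. (indicator B 1 * (\<integral>\<^sup>+a. indicator C (a, y) \<partial>\<xi>) + indicator B (-1) * (\<integral>\<^sup>+a. indicator C (y, a) \<partial>\<xi>)) / 2) (snd x) \<partial>P2)"
  proof (rule nn_integral_cong)
    fix x assume x: "x \<in> space P2"
    then have "fst x \<in> space MW" and y[measurable]: "snd x \<in> space \<xi>" by (auto simp: P2_def space_pair_measure)
    have m1: "(\<lambda>a. indicator C (a, snd x)) \<in> borel_measurable \<xi>" by measurable
    have m2: "(\<lambda>a. indicator C (snd x, a)) \<in> borel_measurable \<xi>" by measurable
    show "Phi \<xi> (indicator (space MW \<times> B \<times> C)) (fst x) (snd x) = (\<lambda>y. (indicator B 1 * (\<integral>\<^sup>+a. indicator C (a, y) \<partial>\<xi>) + indicator B (-1) * (\<integral>\<^sup>+a. indicator C (y, a) \<partial>\<xi>)) / 2) (snd x)"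
      unfolding Phi_def
      using \<open>fst x \<in> space MW\<close> by (simp add: indicator_times nn_integral_cmult[OF m1] nn_integral_cmult[OF m2])
  qed
  also have "\<dots> = (\<integral>\<^sup>+y. (indicator B 1 * (\<integral>\<^sup>+a. indicator C (a, y) \<partial>\<xi>) + indicator B (-1) * (\<integral>\<^sup>+a. indicator C (y, a) \<partial>\<xi>)) / 2 \<partial>\<xi>)"
    by (rule P2_snd) measurable
  also have "\<dots> = (indicator B 1 * (\<integral>\<^sup>+y. \<integral>\<^sup>+a. indicator C (a, y) \<partial>\<xi> \<partial>\<xi>) + indicator B (-1) * (\<integral>\<^sup>+y. \<integral>\<^sup>+a. indicator C (y, a) \<partial>\<xi> \<partial>\<xi>)) / 2"
    by (subst nn_integral_half_add) (simp_all add: nn_integral_cmult)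
  also have "(\<integral>\<^sup>+y. \<integral>\<^sup>+a. indicator C (a, y) \<partial>\<xi> \<partial>\<xi>) = emeasure (\<xi> \<Otimes>\<^sub>M \<xi>) C"
    using pxx.nn_integral_snd[of "indicator C"] by simp
  also have "(\<integral>\<^sup>+y. \<integral>\<^sup>+a. indicator C (y, a) \<partial>\<xi> \<partial>\<xi>) = emeasure (\<xi> \<Otimes>\<^sub>M \<xi>) C"
    using xi.nn_integral_fst[of "indicator C" \<xi>] by simp
  finally show ?thesis
    by (simp add: emeasure_rad divide_ennreal_def distrib_left distrib_right mult_ac)
qed

end


lemma swap_identity:
  assumes P: "prob_space \<xi>" and u[measurable]: "u \<in> borel_measurable \<xi>"
    and f1[measurable]: "f1 \<in> borel_measurable (\<xi> \<Otimes>\<^sub>M \<xi>)" and f2[measurable]: "f2 \<in> borel_measurable (\<xi> \<Otimes>\<^sub>M \<xi>)"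
  shows "(\<integral>\<^sup>+a. \<integral>\<^sup>+b. (u b * f1 (a, b) + u a * f2 (a, b)) / 2 \<partial>\<xi> \<partial>\<xi>)
       = (\<integral>\<^sup>+y. u y * (((\<integral>\<^sup>+a. f1 (a, y) \<partial>\<xi>) + (\<integral>\<^sup>+a. f2 (y, a) \<partial>\<xi>)) / 2) \<partial>\<xi>)"
proof -
  interpret xi: prob_space \<xi> by fact
  interpret pxx: pair_sigma_finite \<xi> \<xi> by unfold_locales
  have "(\<integral>\<^sup>+a. \<integral>\<^sup>+b. (u b * f1 (a, b) + u a * f2 (a, b)) / 2 \<partial>\<xi> \<partial>\<xi>)
      = (\<integral>\<^sup>+a. ((\<integral>\<^sup>+b. u b * f1 (a, b) \<partial>\<xi>) + (\<integral>\<^sup>+b. u a * f2 (a, b) \<partial>\<xi>)) / 2 \<partial>\<xi>)"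
    by (intro nn_integral_cong nn_integral_half_add) measurable
  also have "\<dots> = ((\<integral>\<^sup>+a. \<integral>\<^sup>+b. u b * f1 (a, b) \<partial>\<xi> \<partial>\<xi>) + (\<integral>\<^sup>+a. \<integral>\<^sup>+b. u a * f2 (a, b) \<partial>\<xi> \<partial>\<xi>)) / 2"
    by (intro nn_integral_half_add) measurable
  also have "(\<integral>\<^sup>+a. \<integral>\<^sup>+b. u b * f1 (a, b) \<partial>\<xi> \<partial>\<xi>) = (\<integral>\<^sup>+b. \<integral>\<^sup>+a. u b * f1 (a, b) \<partial>\<xi> \<partial>\<xi>)"
    by (rule pxx.Fubini'[symmetric]) measurable
  also have "\<dots> = (\<integral>\<^sup>+y. u y * (\<integral>\<^sup>+a. f1 (a, y) \<partial>\<xi>) \<partial>\<xi>)"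
    by (intro nn_integral_cong nn_integral_cmult) measurable
  also have "(\<integral>\<^sup>+a. \<integral>\<^sup>+b. u a * f2 (a, b) \<partial>\<xi> \<partial>\<xi>) = (\<integral>\<^sup>+y. u y * (\<integral>\<^sup>+a. f2 (y, a) \<partial>\<xi>) \<partial>\<xi>)"
    by (intro nn_integral_cong nn_integral_cmult) measurable
  also have "((\<integral>\<^sup>+y. u y * (\<integral>\<^sup>+a. f1 (a, y) \<partial>\<xi>) \<partial>\<xi>) + (\<integral>\<^sup>+y. u y * (\<integral>\<^sup>+a. f2 (y, a) \<partial>\<xi>) \<partial>\<xi>)) / 2
      = (\<integral>\<^sup>+y. (u y * (\<integral>\<^sup>+a. f1 (a, y) \<partial>\<xi>) + u y * (\<integral>\<^sup>+a. f2 (y, a) \<partial>\<xi>)) / 2 \<partial>\<xi>)"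
    by (intro nn_integral_half_add[symmetric]) measurable
  also have "\<dots> = (\<integral>\<^sup>+y. u y * (((\<integral>\<^sup>+a. f1 (a, y) \<partial>\<xi>) + (\<integral>\<^sup>+a. f2 (y, a) \<partial>\<xi>)) / 2) \<partial>\<xi>)"
    by (simp add: distrib_left ennreal_times_divide)
  finally show ?thesis .
qed

locale SSetup_ac = SSetup +
  assumes ac: "absolutely_continuous (PW \<Otimes>\<^sub>M PY) P2"
begin

abbreviation "Q2 \<equiv> PW \<Otimes>\<^sub>M \<xi>"

definition "gr x = enn2real (RN_deriv Q2 P2 x)"

abbreviation "N \<equiv> PW \<Otimes>\<^sub>M (\<xi> \<Otimes>\<^sub>M \<xi>)"

definition "Qp = distr (N \<Otimes>\<^sub>M rademacher) X3 (\<lambda>((w, z), r). (w, r, z))"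

definition hr where
  "hr x = (case x of (w, r, a, b) \<Rightarrow> gr (w, if r = 1 then b else a))"

definition kr where
  "kr x = (case x of (w, r, a, b) \<Rightarrow> (gr (w, a) + gr (w, b)) / 2)"

lemma Q2_prob: "prob_space Q2"
  by (intro prob_space_pair PW_prob xi_prob)

lemma N_prob: "prob_space N"
  by (intro prob_space_pair PW_prob xi_prob)

lemma gr_meas[measurable]: "gr \<in> borel_measurable Q2"
  unfolding gr_def by measurable

lemma gr_nonneg: "0 \<le> gr x" unfolding gr_def by simp

lemma hr_meas[measurable]: "hr \<in> borel_measurable X3"
proof -
  have [measurable]: "Measurable.pred X3 (\<lambda>x. fst (snd x) = 1)" by measurable
  have m: "(\<lambda>x. gr (fst x, if fst (snd x) = 1 then snd (snd (snd x)) else fst (snd (snd x)))) \<in> borel_measurable X3"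
    by measurable
  have eq: "hr = (\<lambda>x. gr (fst x, if fst (snd x) = 1 then snd (snd (snd x)) else fst (snd (snd x))))"
    by (rule ext) (simp add: hr_def split: prod.split)
  show ?thesis unfolding eq by (rule m)
qed

lemma kr_meas[measurable]: "kr \<in> borel_measurable X3"
proof -
  have m: "(\<lambda>x. (gr (fst x, fst (snd (snd x))) + gr (fst x, snd (snd (snd x)))) / 2) \<in> borel_measurable X3"
    by measurable
  have eq: "kr = (\<lambda>x. (gr (fst x, fst (snd (snd x))) + gr (fst x, snd (snd (snd x)))) / 2)"
    by (rule ext) (simp add: kr_def split: prod.split)
  show ?thesis unfolding eq by (rule m)
qed

lemma hr_nonneg: "0 \<le> hr x" by (simp add: hr_def gr_nonneg split: prod.split)

lemma hk: "hr x \<le> 2 * kr x"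
  by (auto simp: hr_def kr_def gr_nonneg split: prod.split)

lemma density_Q2: "density Q2 (\<lambda>x. ennreal (gr x)) = P2"
proof -
  interpret Q2: prob_space Q2 by (rule Q2_prob)
  have ac': "absolutely_continuous Q2 P2" using ac by (simp add: PY_xi)
  have sets: "sets P2 = sets Q2" by (simp add: sets_P2 sets_pair_measure_cong[OF sets_PW refl])
  have fin: "AE x in Q2. RN_deriv Q2 P2 x \<noteq> \<infinity>"
    by (rule Q2.RN_deriv_finite[OF prob_space_imp_sigma_finite[OF P2_prob] ac' sets])
  have "density Q2 (\<lambda>x. ennreal (gr x)) = density Q2 (RN_deriv Q2 P2)"
    by (rule density_cong) (use fin in \<open>auto simp: gr_def less_top\<close>)
  also have "\<dots> = P2" by (rule Q2.density_RN_deriv[OF ac' sets])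
  finally show ?thesis .
qed

lemma P2_int: "f \<in> borel_measurable (MW \<Otimes>\<^sub>M \<xi>) \<Longrightarrow> (\<integral>\<^sup>+x. f x \<partial>P2) = (\<integral>\<^sup>+x. ennreal (gr x) * f x \<partial>Q2)"
  by (subst density_Q2[symmetric]) (simp add: nn_integral_density cong: measurable_cong_sets)

lemma Qp_map': "(\<lambda>x. (fst (fst x), snd x, snd (fst x))) \<in> N \<Otimes>\<^sub>M rademacher \<rightarrow>\<^sub>M X3"
proof -
  have c: "(\<lambda>x. snd x) \<in> N \<Otimes>\<^sub>M rademacher \<rightarrow>\<^sub>M count_space (UNIV::int set)"
    by (rule measurable_compose[OF measurable_snd measurable_ident_sets]) simp
  have a: "(\<lambda>x. fst (fst x)) \<in> N \<Otimes>\<^sub>M rademacher \<rightarrow>\<^sub>M MW"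
    by measurable
  have b: "(\<lambda>x. snd (fst x)) \<in> N \<Otimes>\<^sub>M rademacher \<rightarrow>\<^sub>M \<xi> \<Otimes>\<^sub>M \<xi>"
    by measurable
  show ?thesis
    apply (rule measurable_Pair)
    apply (rule a)
    apply (rule measurable_Pair)
    apply (rule c)
    apply (rule b)
    done
qed

lemma Qp_map[measurable]: "(\<lambda>((w, z), r). (w, r, z)) \<in> N \<Otimes>\<^sub>M rademacher \<rightarrow>\<^sub>M X3"
  using Qp_map' by (simp add: split_beta')

lemma sets_Qp[measurable_cong]: "sets Qp = sets X3" by (simp add: Qp_def)

lemma Qp_prob: "prob_space Qp" unfolding Qp_def
  by (intro prob_space.prob_space_distr prob_space_pair N_prob rad_prob Qp_map)

lemma Qp_int:
  assumes f[measurable]: "f \<in> borel_measurable X3"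
  shows "(\<integral>\<^sup>+x. f x \<partial>Qp) = (\<integral>\<^sup>+x. (f (fst x, 1, snd x) + f (fst x, -1, snd x)) / 2 \<partial>N)"
proof -
  interpret rad: prob_space rademacher by (rule rad_prob)
  have "(\<integral>\<^sup>+x. f x \<partial>Qp) = (\<integral>\<^sup>+x. f (fst (fst x), snd x, snd (fst x)) \<partial>(N \<Otimes>\<^sub>M rademacher))"
    unfolding Qp_def by (subst nn_integral_distr[OF Qp_map]) (use f in \<open>simp_all add: split_beta'\<close>)
  also have "\<dots> = (\<integral>\<^sup>+x. \<integral>\<^sup>+r. f (fst x, r, snd x) \<partial>rademacher \<partial>N)"
  proof -
    have [measurable]: "(\<lambda>x. snd x) \<in> N \<Otimes>\<^sub>M rademacher \<rightarrow>\<^sub>M count_space (UNIV::int set)"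
      by (rule measurable_compose[OF measurable_snd measurable_ident_sets]) simp
    have m: "(\<lambda>x. f (fst (fst x), snd x, snd (fst x))) \<in> borel_measurable (N \<Otimes>\<^sub>M rademacher)"
      by measurable
    show ?thesis using rad.nn_integral_fst[OF m] by simp
  qed
  also have "\<dots> = (\<integral>\<^sup>+x. (f (fst x, 1, snd x) + f (fst x, -1, snd x)) / 2 \<partial>N)"
    by (simp add: nn_integral_rad)
  finally show ?thesis .
qed

lemma L8:
  assumes f[measurable]: "f \<in> borel_measurable X3"
  shows "(\<integral>\<^sup>+x. ennreal (hr x) * f x \<partial>Qp) = (\<integral>\<^sup>+x. ennreal (gr x) * Phi \<xi> f (fst x) (snd x) \<partial>Q2)"
proof -
  interpret xi: prob_space \<xi> by (rule P)
  interpret xx: prob_space "\<xi> \<Otimes>\<^sub>M \<xi>" by (intro prob_space_pair P)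
  have Phim[measurable]: "(\<lambda>(w, y). Phi \<xi> f w y) \<in> borel_measurable (MW \<Otimes>\<^sub>M \<xi>)"
    by (rule Phi_measurable[OF P f])
  have "(\<integral>\<^sup>+x. ennreal (hr x) * f x \<partial>Qp)
     = (\<integral>\<^sup>+x. (ennreal (gr (fst x, snd (snd x))) * f (fst x, 1, snd x) + ennreal (gr (fst x, fst (snd x))) * f (fst x, -1, snd x)) / 2 \<partial>N)"
    by (subst Qp_int) (simp_all add: hr_def split_beta')
  also have "\<dots> = (\<integral>\<^sup>+w. \<integral>\<^sup>+z. (ennreal (gr (w, snd z)) * f (w, 1, z) + ennreal (gr (w, fst z)) * f (w, -1, z)) / 2 \<partial>(\<xi> \<Otimes>\<^sub>M \<xi>) \<partial>PW)"
  proof -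
    have m: "(\<lambda>x. (ennreal (gr (fst x, snd (snd x))) * f (fst x, 1, snd x) + ennreal (gr (fst x, fst (snd x))) * f (fst x, -1, snd x)) / 2) \<in> borel_measurable N"
      by measurable
    show ?thesis using xx.nn_integral_fst[OF m] by simp
  qed
  also have "\<dots> = (\<integral>\<^sup>+w. \<integral>\<^sup>+a. \<integral>\<^sup>+b. (ennreal (gr (w, b)) * f (w, 1, (a, b)) + ennreal (gr (w, a)) * f (w, -1, (a, b))) / 2 \<partial>\<xi> \<partial>\<xi> \<partial>PW)"
  proof (rule nn_integral_cong)
    fix w assume w[measurable]: "w \<in> space PW"
    have wM[measurable]: "w \<in> space MW" using w by (simp add: PW_def)
    have m: "(\<lambda>z. (ennreal (gr (w, snd z)) * f (w, 1, z) + ennreal (gr (w, fst z)) * f (w, -1, z)) / 2) \<in> borel_measurable (\<xi> \<Otimes>\<^sub>M \<xi>)"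
      by measurable
    show "(\<integral>\<^sup>+z. (ennreal (gr (w, snd z)) * f (w, 1, z) + ennreal (gr (w, fst z)) * f (w, -1, z)) / 2 \<partial>(\<xi> \<Otimes>\<^sub>M \<xi>)) =
       (\<integral>\<^sup>+a. \<integral>\<^sup>+b. (ennreal (gr (w, b)) * f (w, 1, (a, b)) + ennreal (gr (w, a)) * f (w, -1, (a, b))) / 2 \<partial>\<xi> \<partial>\<xi>)"
      using xi.nn_integral_fst[OF m] by simp
  qed
  also have "\<dots> = (\<integral>\<^sup>+w. \<integral>\<^sup>+y. ennreal (gr (w, y)) * Phi \<xi> f w y \<partial>\<xi> \<partial>PW)"
  proof (rule nn_integral_cong)
    fix w assume w[measurable]: "w \<in> space PW"
    have wM[measurable]: "w \<in> space MW" using w by (simp add: PW_def)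
    have u: "(\<lambda>y. ennreal (gr (w, y))) \<in> borel_measurable \<xi>" by measurable
    have f1: "(\<lambda>z. f (w, 1, z)) \<in> borel_measurable (\<xi> \<Otimes>\<^sub>M \<xi>)" by measurable
    have f2: "(\<lambda>z. f (w, -1, z)) \<in> borel_measurable (\<xi> \<Otimes>\<^sub>M \<xi>)" by measurable
    show "(\<integral>\<^sup>+a. \<integral>\<^sup>+b. (ennreal (gr (w, b)) * f (w, 1, (a, b)) + ennreal (gr (w, a)) * f (w, -1, (a, b))) / 2 \<partial>\<xi> \<partial>\<xi>)
       = (\<integral>\<^sup>+y. ennreal (gr (w, y)) * Phi \<xi> f w y \<partial>\<xi>)"
      using swap_identity[OF P u f1 f2] by (simp add: Phi_def)
  qed
  also have "\<dots> = (\<integral>\<^sup>+x. ennreal (gr x) * Phi \<xi> f (fst x) (snd x) \<partial>Q2)"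
  proof -
    have m: "(\<lambda>x. ennreal (gr x) * Phi \<xi> f (fst x) (snd x)) \<in> borel_measurable Q2"
      by measurable
    show ?thesis using xi.nn_integral_fst[OF m] by simp
  qed
  finally show ?thesis .
qed

end


context SSetup_ac
begin

lemma P3_int:
  assumes f[measurable]: "f \<in> borel_measurable X3"
  shows "(\<integral>\<^sup>+x. f x \<partial>P3) = (\<integral>\<^sup>+x. ennreal (hr x) * f x \<partial>Qp)"
proof -
  have Phim[measurable]: "(\<lambda>(w, y). Phi \<xi> f w y) \<in> borel_measurable (MW \<Otimes>\<^sub>M \<xi>)"
    by (rule Phi_measurable[OF P f])
  have m: "(\<lambda>x. Phi \<xi> f (fst x) (snd x)) \<in> borel_measurable (MW \<Otimes>\<^sub>M \<xi>)"
    using Phim by (simp add: split_beta')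
  show ?thesis
    by (simp add: stepA_P3[OF f] P2_int[OF m] L8[OF f])
qed

lemma P3_density: "P3 = density Qp (\<lambda>x. ennreal (hr x))"
proof (rule measure_eqI)
  show "sets P3 = sets (density Qp (\<lambda>x. ennreal (hr x)))" by (simp add: sets_P3 sets_Qp)
  fix A assume "A \<in> sets P3"
  then have A[measurable]: "A \<in> sets X3" by (simp add: sets_P3)
  have "emeasure P3 A = (\<integral>\<^sup>+x. indicator A x \<partial>P3)" using A by (simp add: sets_P3)
  also have "\<dots> = (\<integral>\<^sup>+x. ennreal (hr x) * indicator A x \<partial>Qp)" by (rule P3_int) simp
  also have "\<dots> = emeasure (density Qp (\<lambda>x. ennreal (hr x))) A"
    by (subst emeasure_density) (simp_all add: sets_Qp)
  finally show "emeasure P3 A = emeasure (density Qp (\<lambda>x. ennreal (hr x))) A" .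
qed

definition "Qc = density Qp (\<lambda>x. ennreal (kr x))"

lemma sets_Qc[measurable_cong]: "sets Qc = sets X3" by (simp add: Qc_def sets_Qp)

lemma kr_r: "kr (w, r::int, z) = kr (w, 1::int, z)" by (simp add: kr_def split: prod.split)

lemma hr_avg: "(ennreal (hr (w, 1::int, z)) + ennreal (hr (w, -1::int, z))) / 2 = ennreal (kr (w, 1::int, z))"
proof -
  obtain a b where z: "z = (a, b)" by (cases z)
  have "ennreal ((gr (w, a) + gr (w, b)) / 2) = ennreal (gr (w, a) + gr (w, b)) / 2"
    by (rule ennreal_divide_numeral[symmetric]) (simp add: gr_nonneg add_nonneg_nonneg)
  also have "\<dots> = (ennreal (gr (w, b)) + ennreal (gr (w, a))) / 2"
    by (simp add: gr_nonneg add.commute)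
  finally show ?thesis by (simp add: hr_def kr_def z)
qed

lemma pointwise_R1:
  fixes k :: ennreal
  shows "(k * indicator (A \<times> B \<times> C) (w, 1::int, z) + k * indicator (A \<times> B \<times> C) (w, -1::int, z)) / 2
     = k * indicator A w * indicator C z * emeasure rademacher B"
  by (simp add: indicator_times emeasure_rad divide_ennreal_def distrib_left distrib_right mult_ac)

lemma R1:
  assumes A[measurable]: "A \<in> sets MW" and C[measurable]: "C \<in> sets (\<xi> \<Otimes>\<^sub>M \<xi>)"
  shows "emeasure Qc (A \<times> B \<times> C) = emeasure rademacher B *
     (\<integral>\<^sup>+x. ennreal (kr (fst x, 1::int, snd x)) * indicator A (fst x) * indicator C (snd x) \<partial>N)"
proof -
  have Bm[measurable]: "B \<in> sets (count_space (UNIV::int set))" by simp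
  have E[measurable]: "A \<times> B \<times> C \<in> sets X3" by measurable
  have "emeasure Qc (A \<times> B \<times> C) = (\<integral>\<^sup>+x. ennreal (kr x) * indicator (A \<times> B \<times> C) x \<partial>Qp)"
    unfolding Qc_def by (subst emeasure_density) (simp_all add: sets_Qp)
  also have "\<dots> = (\<integral>\<^sup>+x. (ennreal (kr (fst x, 1::int, snd x)) * indicator (A \<times> B \<times> C) (fst x, 1::int, snd x)
        + ennreal (kr (fst x, 1::int, snd x)) * indicator (A \<times> B \<times> C) (fst x, -1::int, snd x)) / 2 \<partial>N)"
    by (subst Qp_int) (simp_all add: kr_r[of _ "-1"])
  also have "\<dots> = (\<integral>\<^sup>+x. ennreal (kr (fst x, 1::int, snd x)) * indicator A (fst x) * indicator C (snd x) * emeasure rademacher B \<partial>N)"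
    by (simp only: pointwise_R1)
  also have "\<dots> = emeasure rademacher B * (\<integral>\<^sup>+x. ennreal (kr (fst x, 1::int, snd x)) * indicator A (fst x) * indicator C (snd x) \<partial>N)"
    by (subst nn_integral_multc) (simp_all add: mult.commute)
  finally show ?thesis .
qed

lemma pointwise_R2:
  fixes h1 h2 :: ennreal
  shows "(h1 * indicator (A \<times> UNIV \<times> C) (w, 1::int, z) + h2 * indicator (A \<times> UNIV \<times> C) (w, -1::int, z)) / 2
     = (h1 + h2) / 2 * indicator A w * indicator C z"
  by (simp add: indicator_times divide_ennreal_def distrib_left distrib_right mult_ac)

lemma R2:
  assumes A[measurable]: "A \<in> sets MW" and C[measurable]: "C \<in> sets (\<xi> \<Otimes>\<^sub>M \<xi>)"
  shows "emeasure P3 (A \<times> UNIV \<times> C) =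
     (\<integral>\<^sup>+x. ennreal (kr (fst x, 1::int, snd x)) * indicator A (fst x) * indicator C (snd x) \<partial>N)"
proof -
  have E[measurable]: "A \<times> UNIV \<times> C \<in> sets X3" by measurable
  have "emeasure P3 (A \<times> UNIV \<times> C) = (\<integral>\<^sup>+x. indicator (A \<times> UNIV \<times> C) x \<partial>P3)"
    by (simp add: sets_P3)
  also have "\<dots> = (\<integral>\<^sup>+x. ennreal (hr x) * indicator (A \<times> UNIV \<times> C) x \<partial>Qp)"
    by (rule P3_int) simp
  also have "\<dots> = (\<integral>\<^sup>+x. (ennreal (hr (fst x, 1::int, snd x)) * indicator (A \<times> UNIV \<times> C) (fst x, 1::int, snd x)
       + ennreal (hr (fst x, -1::int, snd x)) * indicator (A \<times> UNIV \<times> C) (fst x, -1::int, snd x)) / 2 \<partial>N)"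
    by (subst Qp_int) simp_all
  also have "\<dots> = (\<integral>\<^sup>+x. ennreal (kr (fst x, 1::int, snd x)) * indicator A (fst x) * indicator C (snd x) \<partial>N)"
    by (simp only: pointwise_R2 hr_avg)
  finally show ?thesis .
qed

end


context SSetup
begin

abbreviation "Wf \<equiv> (\<lambda>\<omega>::(((nat \<Rightarrow> 'z) \<times> (nat \<Rightarrow> 'z) \<times> (nat \<Rightarrow> int)) \<times> 'w). snd \<omega>)"
abbreviation "Rf \<equiv> (\<lambda>\<omega>::(((nat \<Rightarrow> 'z) \<times> (nat \<Rightarrow> 'z) \<times> (nat \<Rightarrow> int)) \<times> 'w). case fst \<omega> of (zm, zp, r) \<Rightarrow> r i)"
abbreviation "Zf \<equiv> (\<lambda>\<omega>::(((nat \<Rightarrow> 'z) \<times> (nat \<Rightarrow> 'z) \<times> (nat \<Rightarrow> int)) \<times> 'w). case fst \<omega> of (zm, zp, r) \<Rightarrow> (zm i, zp i))"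

lemma Zf_meas[measurable]: "Zf \<in> SS \<rightarrow>\<^sub>M \<xi> \<Otimes>\<^sub>M \<xi>" by measurable
lemma Wf_meas[measurable]: "Wf \<in> SS \<rightarrow>\<^sub>M MW" by measurable
lemma Rf_meas[measurable]: "Rf \<in> SS \<rightarrow>\<^sub>M count_space UNIV" by measurable

lemma space_SS_W: "\<omega> \<in> space SS \<Longrightarrow> snd \<omega> \<in> space MW"
  by (auto simp: space_pair_measure sets_eq_imp_space_eq[OF sets_SS])

lemma SS_event:
  assumes A: "A \<in> sets MW" and C: "C \<in> sets (\<xi> \<Otimes>\<^sub>M \<xi>)"
  shows "emeasure SS ((Wf -` A \<inter> space SS) \<inter> (Rf -` B \<inter> space SS) \<inter> (Zf -` C \<inter> space SS)) = emeasure P3 (A \<times> B \<times> C)"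
proof -
  have [measurable]: "B \<in> sets (count_space (UNIV::int set))" by simp
  have "A \<times> B \<times> C \<in> sets X3" using A C by measurable
  then have "emeasure P3 (A \<times> B \<times> C) = emeasure SS (F3 -` (A \<times> B \<times> C) \<inter> space SS)"
    unfolding P3_def by (rule emeasure_distr[OF F3_meas])
  also have "F3 -` (A \<times> B \<times> C) \<inter> space SS = (Wf -` A \<inter> space SS) \<inter> (Rf -` B \<inter> space SS) \<inter> (Zf -` C \<inter> space SS)"
    by (auto simp: F3_def split: prod.splits)
  finally show ?thesis ..
qed

definition "PZ = distr SS (\<xi> \<Otimes>\<^sub>M \<xi>) Zf"

lemma sets_PZ[measurable_cong]: "sets PZ = sets (\<xi> \<Otimes>\<^sub>M \<xi>)" by (simp add: PZ_def)

lemma PZ_prob: "prob_space PZ" unfolding PZ_def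
  by (rule prob_space.prob_space_distr[OF SS_prob Zf_meas])

lemma dens_event:
  assumes E: "E \<in> sets SS" and C: "C \<in> sets (\<xi> \<Otimes>\<^sub>M \<xi>)"
  shows "emeasure (distr (density SS (indicator E)) (\<xi> \<Otimes>\<^sub>M \<xi>) Zf) C = emeasure SS (E \<inter> (Zf -` C \<inter> space SS))"
proof -
  have Zd: "Zf \<in> density SS (indicator E) \<rightarrow>\<^sub>M \<xi> \<Otimes>\<^sub>M \<xi>"
    by (simp add: measurable_cong_sets[OF sets_density refl])
  have pre: "Zf -` C \<inter> space SS \<in> sets SS" using C by measurable
  have "emeasure (distr (density SS (indicator E)) (\<xi> \<Otimes>\<^sub>M \<xi>) Zf) C = emeasure (density SS (indicator E)) (Zf -` C \<inter> space SS)"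
    using emeasure_distr[OF Zd C] by simp
  also have "\<dots> = (\<integral>\<^sup>+x. indicator E x * indicator (Zf -` C \<inter> space SS) x \<partial>SS)"
    using E pre by (subst emeasure_density) auto
  also have "\<dots> = (\<integral>\<^sup>+x. indicator (E \<inter> (Zf -` C \<inter> space SS)) x \<partial>SS)"
    by (simp add: indicator_inter_arith)
  also have "\<dots> = emeasure SS (E \<inter> (Zf -` C \<inter> space SS))"
    using E pre by simp
  finally show ?thesis .
qed

lemma nu_eq:
  assumes A: "A \<in> sets MW" and C: "C \<in> sets (\<xi> \<Otimes>\<^sub>M \<xi>)"
  shows "emeasure (distr (density SS (indicator (Wf -` A \<inter> space SS))) (\<xi> \<Otimes>\<^sub>M \<xi>) Zf) C = emeasure P3 (A \<times> UNIV \<times> C)"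
proof -
  have E: "Wf -` A \<inter> space SS \<in> sets SS" using A by measurable
  show ?thesis
    using SS_event[OF A C, of UNIV] dens_event[OF E C] by (simp add: Int_assoc)
qed

lemma mu_eq:
  assumes C: "C \<in> sets (\<xi> \<Otimes>\<^sub>M \<xi>)"
  shows "emeasure (distr (density SS (indicator (Rf -` B \<inter> space SS))) (\<xi> \<Otimes>\<^sub>M \<xi>) Zf) C = emeasure P3 (space MW \<times> B \<times> C)"
proof -
  have E: "Rf -` B \<inter> space SS \<in> sets SS" by measurable
  have W: "Wf -` space MW \<inter> space SS = space SS" using space_SS_W by auto
  show ?thesis
    using SS_event[OF sets.top C, of B] dens_event[OF E C] W by (simp add: Int_assoc)
qed

lemma PZ_eq:
  assumes C: "C \<in> sets (\<xi> \<Otimes>\<^sub>M \<xi>)"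
  shows "emeasure PZ C = emeasure (\<xi> \<Otimes>\<^sub>M \<xi>) C"
proof -
  have "emeasure PZ C = emeasure SS (Zf -` C \<inter> space SS)"
    unfolding PZ_def using C by (rule emeasure_distr[OF Zf_meas])
  also have "\<dots> = emeasure P3 (space MW \<times> UNIV \<times> C)"
    using SS_event[OF sets.top C, of UNIV] space_SS_W by (simp add: Int_absorb1 subset_iff)
  also have "\<dots> = emeasure (\<xi> \<Otimes>\<^sub>M \<xi>) C"
    using E1[OF C, of UNIV] by (simp add: emeasure_rad)
  finally show ?thesis .
qed

lemma PZ_P3:
  assumes C: "C \<in> sets (\<xi> \<Otimes>\<^sub>M \<xi>)"
  shows "emeasure PZ C = emeasure P3 (space MW \<times> UNIV \<times> C)"
proof -
  have "emeasure PZ C = emeasure SS (Zf -` C \<inter> space SS)"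
    unfolding PZ_def using C by (rule emeasure_distr[OF Zf_meas])
  also have "\<dots> = emeasure P3 (space MW \<times> UNIV \<times> C)"
    using SS_event[OF sets.top C, of UNIV] space_SS_W by (simp add: Int_absorb1 subset_iff)
  finally show ?thesis .
qed

lemma cpR_ae:
  "AE z in PZ. emeasure rademacher B = cond_prob SS (count_space UNIV) (\<xi> \<Otimes>\<^sub>M \<xi>) Rf Zf B z"
proof -
  interpret PZ: prob_space PZ by (rule PZ_prob)
  have "density PZ (\<lambda>_. emeasure rademacher B) = distr (density SS (indicator (Rf -` B \<inter> space SS))) (\<xi> \<Otimes>\<^sub>M \<xi>) Zf"
  proof (rule measure_eqI)
    show "sets (density PZ (\<lambda>_. emeasure rademacher B)) = sets (distr (density SS (indicator (Rf -` B \<inter> space SS))) (\<xi> \<Otimes>\<^sub>M \<xi>) Zf)"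
      by (simp add: sets_PZ)
    fix C assume "C \<in> sets (density PZ (\<lambda>_. emeasure rademacher B))"
    then have C: "C \<in> sets (\<xi> \<Otimes>\<^sub>M \<xi>)" by (simp add: sets_PZ)
    show "emeasure (density PZ (\<lambda>_. emeasure rademacher B)) C = emeasure (distr (density SS (indicator (Rf -` B \<inter> space SS))) (\<xi> \<Otimes>\<^sub>M \<xi>) Zf) C"
      using C by (simp add: emeasure_density_const sets_PZ PZ_eq mu_eq E1)
  qed
  then have "AE z in PZ. emeasure rademacher B = RN_deriv PZ (distr (density SS (indicator (Rf -` B \<inter> space SS))) (\<xi> \<Otimes>\<^sub>M \<xi>) Zf) z"
    by (intro PZ.RN_deriv_unique) simp_all
  then show ?thesis unfolding cond_prob_def PZ_def .
qed

lemma cpW_density: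
  assumes A: "A \<in> sets MW"
  shows "density PZ (cond_prob SS MW (\<xi> \<Otimes>\<^sub>M \<xi>) Wf Zf A) = distr (density SS (indicator (Wf -` A \<inter> space SS))) (\<xi> \<Otimes>\<^sub>M \<xi>) Zf"
proof -
  interpret PZ: prob_space PZ by (rule PZ_prob)
  let ?nu = "distr (density SS (indicator (Wf -` A \<inter> space SS))) (\<xi> \<Otimes>\<^sub>M \<xi>) Zf"
  have ac: "absolutely_continuous PZ ?nu"
    unfolding absolutely_continuous_def
  proof
    fix C assume "C \<in> null_sets PZ"
    then have C: "C \<in> sets (\<xi> \<Otimes>\<^sub>M \<xi>)" and C0: "emeasure PZ C = 0" by (auto simp: sets_PZ)
    have "emeasure ?nu C = emeasure P3 (A \<times> UNIV \<times> C)" by (rule nu_eq[OF A C])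
    also have "\<dots> \<le> emeasure P3 (space MW \<times> UNIV \<times> C)"
      using sets.sets_into_space[OF A] C by (intro emeasure_mono) (auto simp: sets_P3)
    also have "\<dots> = 0" using C0 PZ_P3[OF C] by simp
    finally show "C \<in> null_sets ?nu" using C by (auto simp: null_sets_def)
  qed
  have "density PZ (RN_deriv PZ ?nu) = ?nu"
    by (rule PZ.density_RN_deriv[OF ac]) (simp add: sets_PZ)
  then show ?thesis unfolding cond_prob_def PZ_def .
qed

lemma rect_formula:
  assumes A: "A \<in> sets MW" and C: "C \<in> sets (\<xi> \<Otimes>\<^sub>M \<xi>)"
  shows "(\<integral>\<^sup>+z\<in>C. cond_prob SS MW (\<xi> \<Otimes>\<^sub>M \<xi>) Wf Zf A z * cond_prob SS (count_space UNIV) (\<xi> \<Otimes>\<^sub>M \<xi>) Rf Zf B z \<partial>distr SS (\<xi> \<Otimes>\<^sub>M \<xi>) Zf)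
    = emeasure rademacher B * emeasure P3 (A \<times> UNIV \<times> C)"
proof -
  let ?cw = "cond_prob SS MW (\<xi> \<Otimes>\<^sub>M \<xi>) Wf Zf A"
  have cwm: "?cw \<in> borel_measurable PZ" unfolding cond_prob_def PZ_def by simp
  have "(\<integral>\<^sup>+z\<in>C. ?cw z * cond_prob SS (count_space UNIV) (\<xi> \<Otimes>\<^sub>M \<xi>) Rf Zf B z \<partial>PZ)
      = (\<integral>\<^sup>+z. emeasure rademacher B * (?cw z * indicator C z) \<partial>PZ)"
    using cpR_ae[of B] by (intro nn_integral_cong_AE) (auto simp: mult_ac)
  also have "\<dots> = emeasure rademacher B * (\<integral>\<^sup>+z. ?cw z * indicator C z \<partial>PZ)"
    using C cwm by (intro nn_integral_cmult) (auto simp: sets_PZ)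
  also have "(\<integral>\<^sup>+z. ?cw z * indicator C z \<partial>PZ) = emeasure (density PZ ?cw) C"
    using C cwm by (subst emeasure_density) (auto simp: sets_PZ)
  also have "\<dots> = emeasure P3 (A \<times> UNIV \<times> C)"
    using cpW_density[OF A] nu_eq[OF A C] by simp
  finally show ?thesis unfolding PZ_def .
qed

end


lemma sets_X3_gen:
  fixes MW :: "'w measure" and Z :: "'z measure"
  defines "G2 \<equiv> {B \<times> C | (B::int set) C. C \<in> sets Z}"
  defines "E \<equiv> {a \<times> b | a b. a \<in> sets MW \<and> b \<in> G2}"
  shows "sets (MW \<Otimes>\<^sub>M (count_space UNIV \<Otimes>\<^sub>M Z)) = sigma_sets (space MW \<times> (UNIV \<times> space Z)) E"
    and "E \<subseteq> Pow (space MW \<times> (UNIV \<times> space Z))"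
    and "Int_stable E"
    and "space MW \<times> (UNIV \<times> space Z) \<in> E"
proof -
  have G2P: "G2 \<subseteq> Pow (UNIV \<times> space Z)"
    unfolding G2_def using sets.sets_into_space[of _ Z] by blast
  have s1: "sets (count_space (UNIV::int set) \<Otimes>\<^sub>M Z) = sets (sigma (UNIV \<times> space Z) G2)"
    unfolding G2_def
    by (rule sets_pair_eq[of "UNIV" "count_space UNIV" "{UNIV}" "sets Z" Z "{space Z}", simplified])
       (auto simp: sets.sigma_sets_eq dest: sets.sets_into_space)
  have s1': "sets (count_space (UNIV::int set) \<Otimes>\<^sub>M Z) = sigma_sets (UNIV \<times> space Z) G2"
    using s1 G2P by simp
  have sp: "space (count_space (UNIV::int set) \<Otimes>\<^sub>M Z) = UNIV \<times> space Z" by (simp add: space_pair_measure)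
  have inG2: "UNIV \<times> space Z \<in> G2" unfolding G2_def by auto
  have s2: "sets (MW \<Otimes>\<^sub>M (count_space UNIV \<Otimes>\<^sub>M Z)) = sets (sigma (space MW \<times> (UNIV \<times> space Z)) E)"
    unfolding E_def
    by (rule sets_pair_eq[of "sets MW" MW "{space MW}" G2 "count_space UNIV \<Otimes>\<^sub>M Z" "{UNIV \<times> space Z}", unfolded sp])
       (use G2P s1' inG2 in \<open>auto simp: sets.sigma_sets_eq dest: sets.sets_into_space\<close>)
  show EP: "E \<subseteq> Pow (space MW \<times> (UNIV \<times> space Z))"
    unfolding E_def using G2P sets.sets_into_space[of _ MW] by blast
  show "sets (MW \<Otimes>\<^sub>M (count_space UNIV \<Otimes>\<^sub>M Z)) = sigma_sets (space MW \<times> (UNIV \<times> space Z)) E"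
    using s2 EP by simp
  show "Int_stable E"
  proof (rule Int_stableI)
    fix X Y assume "X \<in> E" "Y \<in> E"
    then obtain a B C a' B' C' where X: "X = a \<times> (B \<times> C)" "a \<in> sets MW" "C \<in> sets Z"
      and Y: "Y = a' \<times> (B' \<times> C')" "a' \<in> sets MW" "C' \<in> sets Z"
      unfolding E_def G2_def by blast
    have "X \<inter> Y = (a \<inter> a') \<times> ((B \<inter> B') \<times> (C \<inter> C'))" using X Y by auto
    moreover have "(B \<inter> B') \<times> (C \<inter> C') \<in> G2" using X Y unfolding G2_def by auto
    ultimately show "X \<inter> Y \<in> E" using X Y unfolding E_def by auto
  qed
  show "space MW \<times> (UNIV \<times> space Z) \<in> E"
    unfolding E_def G2_def by auto
qed

context SSetup_ac
begin

lemma Qc_rect: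
  assumes A: "A \<in> sets MW" and C: "C \<in> sets (\<xi> \<Otimes>\<^sub>M \<xi>)"
  shows "emeasure Qc (A \<times> B \<times> C) = emeasure rademacher B * emeasure P3 (A \<times> UNIV \<times> C)"
  using R1[OF A C, of B] R2[OF A C] by simp

lemma cond_product_eq: "cond_product SS MW (count_space UNIV) (\<xi> \<Otimes>\<^sub>M \<xi>) Wf Rf Zf = Qc"
  unfolding cond_product_def
proof (rule the_equality)
  show "sets Qc = sets (MW \<Otimes>\<^sub>M count_space UNIV \<Otimes>\<^sub>M \<xi> \<Otimes>\<^sub>M \<xi>) \<and>
    (\<forall>A\<in>sets MW. \<forall>B\<in>sets (count_space UNIV). \<forall>C\<in>sets (\<xi> \<Otimes>\<^sub>M \<xi>).
        emeasure Qc (A \<times> B \<times> C) =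
        (\<integral>\<^sup>+z\<in>C. cond_prob SS MW (\<xi> \<Otimes>\<^sub>M \<xi>) Wf Zf A z * cond_prob SS (count_space UNIV) (\<xi> \<Otimes>\<^sub>M \<xi>) Rf Zf B z \<partial>distr SS (\<xi> \<Otimes>\<^sub>M \<xi>) Zf))"
    by (simp add: sets_Qc Qc_rect rect_formula)
next
  fix Q assume Q: "sets Q = sets (MW \<Otimes>\<^sub>M count_space UNIV \<Otimes>\<^sub>M \<xi> \<Otimes>\<^sub>M \<xi>) \<and>
    (\<forall>A\<in>sets MW. \<forall>B\<in>sets (count_space UNIV). \<forall>C\<in>sets (\<xi> \<Otimes>\<^sub>M \<xi>).
        emeasure Q (A \<times> B \<times> C) =
        (\<integral>\<^sup>+z\<in>C. cond_prob SS MW (\<xi> \<Otimes>\<^sub>M \<xi>) Wf Zf A z * cond_prob SS (count_space UNIV) (\<xi> \<Otimes>\<^sub>M \<xi>) Rf Zf B z \<partial>distr SS (\<xi> \<Otimes>\<^sub>M \<xi>) Zf))"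
  let ?G2 = "{B \<times> C | (B::int set) C. C \<in> sets (\<xi> \<Otimes>\<^sub>M \<xi>)}"
  let ?E = "{a \<times> b | a b. a \<in> sets MW \<and> b \<in> ?G2}"
  let ?\<Omega> = "space MW \<times> (UNIV \<times> space (\<xi> \<Otimes>\<^sub>M \<xi>))"
  note gen = sets_X3_gen[of MW "\<xi> \<Otimes>\<^sub>M \<xi>"]
  have fin: "emeasure Qc ?\<Omega> \<noteq> \<infinity>"
  proof -
    interpret P3: prob_space P3 by (rule P3_prob)
    have "emeasure Qc ?\<Omega> = emeasure rademacher UNIV * emeasure P3 (space MW \<times> UNIV \<times> space (\<xi> \<Otimes>\<^sub>M \<xi>))"
      by (rule Qc_rect) simp_all
    then show ?thesis by (simp add: emeasure_rad P3.emeasure_finite)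
  qed
  have "Qc = Q"
  proof (rule measure_eqI_generator_eq[OF gen(3) gen(2), where A="\<lambda>_. ?\<Omega>"])
    fix X assume "X \<in> ?E"
    then obtain A B C where X: "X = A \<times> (B \<times> C)" and A: "A \<in> sets MW" and C: "C \<in> sets (\<xi> \<Otimes>\<^sub>M \<xi>)"
      by blast
    show "emeasure Qc X = emeasure Q X"
      using Q A C by (simp add: X Qc_rect rect_formula)
  next
    show "sets Qc = sigma_sets ?\<Omega> ?E" using gen(1) by (simp add: sets_Qc)
    show "sets Q = sigma_sets ?\<Omega> ?E" using gen(1) Q by simp
    show "range (\<lambda>_. ?\<Omega>) \<subseteq> ?E" using gen(4) by auto
  qed (use fin in auto)
  then show "Q = Qc" ..
qed

end


lemma xlnx_le: "0 \<le> (h::real) \<Longrightarrow> ennreal h * ennreal (- ln h) \<le> 1"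
proof (cases "h = 0")
  case False
  assume h: "0 \<le> h"
  then have hp: "0 < h" using False by simp
  show ?thesis
  proof (cases "- ln h \<le> 0")
    case True then show ?thesis by (simp add: ennreal_neg)
  next
    case False
    have "ln (1 / h) \<le> 1 / h - 1" using hp by (intro ln_le_minus_one) simp
    then have "- ln h \<le> 1 / h - 1" using hp by (simp add: ln_div)
    then have "h * (- ln h) \<le> h * (1 / h - 1)" using hp by (intro mult_left_mono) auto
    also have "\<dots> = 1 - h" using hp by (simp add: field_simps)
    finally have "h * (- ln h) \<le> 1" using hp by simp
    then show ?thesis using h False by (simp add: ennreal_mult''[symmetric] ennreal_le_1)
  qed
qed simp

context SSetup_ac
begin

lemma Qc_prob: "prob_space Qc"
proof (rule prob_spaceI)
  interpret P3: prob_space P3 by (rule P3_prob)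
  have sp: "space Qc = space MW \<times> UNIV \<times> space (\<xi> \<Otimes>\<^sub>M \<xi>)"
    using sets_eq_imp_space_eq[OF sets_Qc] by (simp add: space_pair_measure)
  have "emeasure Qc (space MW \<times> UNIV \<times> space (\<xi> \<Otimes>\<^sub>M \<xi>)) = emeasure rademacher UNIV * emeasure P3 (space MW \<times> UNIV \<times> space (\<xi> \<Otimes>\<^sub>M \<xi>))"
    by (rule Qc_rect) simp_all
  also have "space MW \<times> UNIV \<times> space (\<xi> \<Otimes>\<^sub>M \<xi>) = space P3"
    using sets_eq_imp_space_eq[OF sets_P3] by (simp add: space_pair_measure)
  finally show "emeasure Qc (space Qc) = 1"
    using sp \<open>space MW \<times> UNIV \<times> space (\<xi> \<Otimes>\<^sub>M \<xi>) = space P3\<close> by (simp add: emeasure_rad P3.emeasure_space_1)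
qed

lemma P3_density_Qc: "P3 = density Qc (\<lambda>x. ennreal (hr x / kr x))"
proof -
  have "density Qc (\<lambda>x. ennreal (hr x / kr x)) = density Qp (\<lambda>x. ennreal (kr x) * ennreal (hr x / kr x))"
    unfolding Qc_def by (rule density_density_eq) (simp_all add: sets_Qp cong: measurable_cong_sets)
  also have "\<dots> = density Qp (\<lambda>x. ennreal (hr x))"
  proof (rule density_cong)
    show "(\<lambda>x. ennreal (kr x) * ennreal (hr x / kr x)) \<in> borel_measurable Qp"
      by (simp add: sets_Qp cong: measurable_cong_sets)
    show "(\<lambda>x. ennreal (hr x)) \<in> borel_measurable Qp"
      by (simp add: sets_Qp cong: measurable_cong_sets)
    show "AE x in Qp. ennreal (kr x) * ennreal (hr x / kr x) = ennreal (hr x)"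
    proof (rule AE_I2)
      fix x
      have h0: "0 \<le> hr x" by (rule hr_nonneg)
      have hk': "hr x \<le> 2 * kr x" by (rule hk)
      show "ennreal (kr x) * ennreal (hr x / kr x) = ennreal (hr x)"
      proof (cases "kr x = 0")
        case True then show ?thesis using h0 hk' by simp
      next
        case False
        then have "0 < kr x" using h0 hk' by linarith
        then show ?thesis using h0 by (simp add: ennreal_mult''[symmetric])
      qed
    qed
  qed
  finally show ?thesis using P3_density by simp
qed

lemma KL_P3: "KL_div P3 Qc = enn2ereal (\<integral>\<^sup>+x. ennreal (ln (hr x / kr x)) \<partial>P3) - enn2ereal (\<integral>\<^sup>+x. ennreal (- ln (hr x / kr x)) \<partial>P3)"
proof -
  interpret Qc: prob_space Qc by (rule Qc_prob)
  have rm: "(\<lambda>x. ennreal (hr x / kr x)) \<in> borel_measurable Qc"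
    by (simp add: sets_Qc cong: measurable_cong_sets)
  have ac3: "absolutely_continuous Qc P3"
    by (subst P3_density_Qc) (rule absolutely_continuousI_density[OF rm])
  have ae1: "AE x in Qc. ennreal (hr x / kr x) = RN_deriv Qc P3 x"
    by (rule Qc.RN_deriv_unique[OF rm P3_density_Qc[symmetric]])
  have ae: "AE x in P3. enn2real (RN_deriv Qc P3 x) = hr x / kr x"
  proof -
    have "AE x in density Qc (\<lambda>x. ennreal (hr x / kr x)). enn2real (RN_deriv Qc P3 x) = hr x / kr x"
      unfolding AE_density[OF rm]
      using ae1 by eventually_elim (auto simp: hr_nonneg divide_nonneg_nonneg[OF hr_nonneg] order.trans[OF hr_nonneg hk] dest: sym)
    then show ?thesis by (simp only: P3_density_Qc[symmetric])
  qed
  have "KL_div P3 Qc = enn2ereal (\<integral>\<^sup>+x. ennreal (ln (enn2real (RN_deriv Qc P3 x))) \<partial>P3) - enn2ereal (\<integral>\<^sup>+x. ennreal (- ln (enn2real (RN_deriv Qc P3 x))) \<partial>P3)"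
    unfolding KL_div_def using ac3 by (simp add: Let_def)
  also have "\<dots> = enn2ereal (\<integral>\<^sup>+x. ennreal (ln (hr x / kr x)) \<partial>P3) - enn2ereal (\<integral>\<^sup>+x. ennreal (- ln (hr x / kr x)) \<partial>P3)"
    using ae by (intro arg_cong2[where f="(-)"] arg_cong[where f=enn2ereal] nn_integral_cong_AE) auto
  finally show ?thesis .
qed

lemma P3_psi:
  assumes F[measurable]: "F \<in> borel_measurable (MW \<Otimes>\<^sub>M \<xi>)"
  shows "(\<integral>\<^sup>+x. F (fst x, if fst (snd x) = 1 then snd (snd (snd x)) else fst (snd (snd x))) \<partial>P3) = (\<integral>\<^sup>+x. F x \<partial>P2)"
proof -
  interpret xi: prob_space \<xi> by (rule P)
  have [measurable]: "Measurable.pred X3 (\<lambda>x. fst (snd x) = (1::int))" by measurable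
  have f: "(\<lambda>x. F (fst x, if fst (snd x) = 1 then snd (snd (snd x)) else fst (snd (snd x)))) \<in> borel_measurable X3"
    by measurable
  have "(\<integral>\<^sup>+x. F (fst x, if fst (snd x) = 1 then snd (snd (snd x)) else fst (snd (snd x))) \<partial>P3)
     = (\<integral>\<^sup>+x. Phi \<xi> (\<lambda>x. F (fst x, if fst (snd x) = 1 then snd (snd (snd x)) else fst (snd (snd x)))) (fst x) (snd x) \<partial>P2)"
    by (rule stepA_P3[OF f])
  also have "\<dots> = (\<integral>\<^sup>+x. F x \<partial>P2)"
  proof (rule nn_integral_cong)
    fix x assume "x \<in> space P2"
    have "(F x + F x) / 2 = F x"
      by (simp add: mult_2[symmetric] mult.commute[of 2] ennreal_mult_divide_eq)
    then show "Phi \<xi> (\<lambda>x. F (fst x, if fst (snd x) = 1 then snd (snd (snd x)) else fst (snd (snd x)))) (fst x) (snd x) = F x"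
      by (simp add: Phi_def xi.emeasure_space_1)
  qed
  finally show ?thesis .
qed

lemma hr_psi: "hr x = gr (fst x, if fst (snd x) = (1::int) then snd (snd (snd x)) else fst (snd (snd x)))"
  by (simp add: hr_def split: prod.split)

lemma KL_P2: "KL_div P2 (PW \<Otimes>\<^sub>M PY) = enn2ereal (\<integral>\<^sup>+x. ennreal (ln (hr x)) \<partial>P3) - enn2ereal (\<integral>\<^sup>+x. ennreal (- ln (hr x)) \<partial>P3)"
proof -
  have "KL_div P2 (PW \<Otimes>\<^sub>M PY) = enn2ereal (\<integral>\<^sup>+x. ennreal (ln (gr x)) \<partial>P2) - enn2ereal (\<integral>\<^sup>+x. ennreal (- ln (gr x)) \<partial>P2)"
    unfolding KL_div_def using ac by (simp add: Let_def gr_def PY_xi)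
  also have "(\<integral>\<^sup>+x. ennreal (ln (gr x)) \<partial>P2) = (\<integral>\<^sup>+x. ennreal (ln (hr x)) \<partial>P3)"
    unfolding hr_psi by (rule P3_psi[symmetric]) measurable
  also have "(\<integral>\<^sup>+x. ennreal (- ln (gr x)) \<partial>P2) = (\<integral>\<^sup>+x. ennreal (- ln (hr x)) \<partial>P3)"
    unfolding hr_psi by (rule P3_psi[symmetric]) measurable
  finally show ?thesis .
qed

lemma hpos: "AE x in P3. 0 < hr x"
proof -
  have "AE x in density Qp (\<lambda>x. ennreal (hr x)). 0 < hr x"
    by (subst AE_density) (auto simp: sets_Qp cong: measurable_cong_sets)
  then show ?thesis by (simp only: P3_density[symmetric])
qed

lemma kr_nonneg: "0 \<le> kr x" by (simp add: kr_def gr_nonneg split: prod.split)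

lemma ik: "(\<integral>\<^sup>+x. ennreal (1 / kr x) \<partial>P3) \<le> 1"
proof -
  interpret N: prob_space N by (rule N_prob)
  have "(\<integral>\<^sup>+x. ennreal (1 / kr x) \<partial>P3) = (\<integral>\<^sup>+x. ennreal (hr x) * ennreal (1 / kr x) \<partial>Qp)"
    by (rule P3_int) measurable
  also have "\<dots> = (\<integral>\<^sup>+x. (ennreal (hr (fst x, 1::int, snd x)) * ennreal (1 / kr (fst x, 1::int, snd x))
       + ennreal (hr (fst x, -1::int, snd x)) * ennreal (1 / kr (fst x, -1::int, snd x))) / 2 \<partial>N)"
    by (rule Qp_int) measurable
  also have "\<dots> \<le> (\<integral>\<^sup>+x. 1 \<partial>N)"
  proof (rule nn_integral_mono)
    fix x
    have e: "(ennreal (hr (fst x, 1::int, snd x)) * ennreal (1 / kr (fst x, 1::int, snd x))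
       + ennreal (hr (fst x, -1::int, snd x)) * ennreal (1 / kr (fst x, -1::int, snd x))) / 2
       = ((ennreal (hr (fst x, 1::int, snd x)) + ennreal (hr (fst x, -1::int, snd x))) / 2) * ennreal (1 / kr (fst x, 1::int, snd x))"
      by (simp add: kr_r[of _ "-1"] divide_ennreal_def distrib_left distrib_right mult_ac)
    have "ennreal (kr (fst x, 1::int, snd x)) * ennreal (1 / kr (fst x, 1::int, snd x)) = ennreal (kr (fst x, 1::int, snd x) * (1 / kr (fst x, 1::int, snd x)))"
      by (rule ennreal_mult[symmetric]) (simp_all add: kr_nonneg)
    also have "\<dots> \<le> 1"
      by (cases "kr (fst x, 1::int, snd x) = 0") (simp_all add: ennreal_le_1)
    finally show "(ennreal (hr (fst x, 1::int, snd x)) * ennreal (1 / kr (fst x, 1::int, snd x))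
       + ennreal (hr (fst x, -1::int, snd x)) * ennreal (1 / kr (fst x, -1::int, snd x))) / 2 \<le> 1"
      unfolding e hr_avg .
  qed
  also have "\<dots> = 1" by (simp add: N.emeasure_space_1)
  finally show ?thesis .
qed

lemma Rnfin: "(\<integral>\<^sup>+x. ennreal (- ln (hr x)) \<partial>P3) \<noteq> \<infinity>"
proof -
  interpret Qp: prob_space Qp by (rule Qp_prob)
  have "(\<integral>\<^sup>+x. ennreal (- ln (hr x)) \<partial>P3) = (\<integral>\<^sup>+x. ennreal (hr x) * ennreal (- ln (hr x)) \<partial>Qp)"
    by (rule P3_int) measurable
  also have "\<dots> \<le> (\<integral>\<^sup>+x. 1 \<partial>Qp)"
    by (intro nn_integral_mono xlnx_le hr_nonneg)
  also have "\<dots> = 1" by (simp add: Qp.emeasure_space_1)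
  finally show ?thesis by (auto simp: top_unique)
qed

lemma main_ac: "KL_div P3 Qc \<le> KL_div P2 (PW \<Otimes>\<^sub>M PY)"
  unfolding KL_P3 KL_P2
proof (rule KL_ineq[OF P3_prob _ _ hr_nonneg hk hpos ik Rnfin])
  show "hr \<in> borel_measurable P3" by (simp add: sets_P3 cong: measurable_cong_sets)
  show "kr \<in> borel_measurable P3" by (simp add: sets_P3 cong: measurable_cong_sets)
qed

end


context SSetup
begin

lemma main: "KL_div P3 (cond_product SS MW (count_space UNIV) (\<xi> \<Otimes>\<^sub>M \<xi>) Wf Rf Zf) \<le> KL_div P2 (PW \<Otimes>\<^sub>M PY)"
proof (cases "absolutely_continuous (PW \<Otimes>\<^sub>M PY) P2")
  case True
  interpret SSetup_ac n \<xi> MW K i by unfold_locales (fact True)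
  show ?thesis using main_ac cond_product_eq by simp
next
  case False
  then show ?thesis by (simp add: KL_div_def)
qed

end

theorem lemma3:
  fixes n :: nat and \<xi> :: "'z measure" and MW :: "'w measure"
    and K :: "(nat \<Rightarrow> 'z) \<Rightarrow> 'w measure" and i :: nat
  assumes "prob_space \<xi>"
    and "K \<in> PiM {..<n} (\<lambda>_. \<xi>) \<rightarrow>\<^sub>M prob_algebra MW"
    and "i < n"
  shows "cond_mutual_info (supersample n \<xi> MW K) MW (count_space UNIV) (\<xi> \<Otimes>\<^sub>M \<xi>)
           (\<lambda>\<omega>. snd \<omega>)
           (\<lambda>\<omega>. case fst \<omega> of (zm, zp, r) \<Rightarrow> r i)
           (\<lambda>\<omega>. case fst \<omega> of (zm, zp, r) \<Rightarrow> (zm i, zp i))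
         \<le> mutual_info (standard_law n \<xi> MW K) MW \<xi> (\<lambda>\<omega>. snd \<omega>) (\<lambda>\<omega>. fst \<omega> i)"
proof -
  interpret S: SSetup n \<xi> MW K i by (rule SSetup.intro) (fact assms)+
  show ?thesis
    unfolding cond_mutual_info_def mutual_info_def
    using S.main by (simp add: S.P3_def S.F3_def[abs_def] S.P2_def S.PW_def S.PY_def)
qed

end
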